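(* Let $\Gamma$ be a rationally metrised graph and $u,v$ vertices of $\Gamma$. Let $\mathrm W_\bullet$ be the filtration of $\mathbb Q\pi_1(\Gamma;u,v)$ given by $\mathrm W_{-k}\mathbb Q\pi_1(\Gamma;u,v)=\mathbb Q\pi_1(\Gamma;u,v)\cdot J^k$, where $J$ is the augmentation ideal of the group algebra $\mathbb Q\pi_1(\Gamma,u)$. Then for every $n\ge0$ the higher cycle pairing induces a perfect pairing \[\int\colon\mathbb Q\pi_1(\Gamma;u,v)/\mathrm W_{-n-1}\otimes\textstyle\bigoplus_{m\le n}\mathrm H_1(\Gamma)^{\otimes m}\to\mathbb Q,\] and the resulting isomorphisms $\mathbb Q\pi_1(\Gamma;u,v)/\mathrm W_{-n-1}\xrightarrow{\sim}\bigoplus_{m\le n}\mathrm H^1(\Gamma)^{\otimes m}$ induce an isomorphism \[\widehat{\mathbb Q}\pi_1(\Gamma;u,v):=\varprojlim_n\mathbb Q\pi_1(\Gamma;u,v)/\mathrm W_{-n-1}\xrightarrow{\sim}\prod_{m\ge0}\mathrm H^1(\Gamma)^{\otimes m}.\]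
   Context: A graph consists of finite sets of vertices $V$, oriented edges $E$ and half-edges $D$, a source map $s\colon E\sqcup D\to V$, and a fixed-point-free involution $e\mapsto e^{-1}$ on $E$, with $t(e):=s(e^{-1})$; graphs are nonempty and connected. A rationally metrised graph also has lengths $\ell\colon E\to\mathbb Q_{>0}$ with $\ell(e^{-1})=\ell(e)$. $\pi_1(\Gamma;u,v)$ is the set of homotopy classes of paths from $u$ to $v$, composition written right to left ($\gamma'\gamma$ means $\gamma$ then $\gamma'$), and $\mathbb Q\pi_1(\Gamma;u,v)$ the $\mathbb Q$-vector space on it. $\mathbb Q\cdot E^{\pm}$ is the $\mathbb Q$-span of edges modulo $e^{-1}=-e$, with pairing $\int_e e'=\pm\ell(e)$ if $e'=e^{\pm1}$ and $0$ otherwise; $\mathrm H_1(\Gamma)=\mathrm H_1(\Gamma,\mathbb Q)\subset\mathbb Q\cdot E^\pm$ with the restricted (cycle) pairing, $\mathrm H^1(\Gamma)=\mathrm{Hom}(\mathrm H_1(\Gamma),\mathbb Q)$. The higher cycle pairing $\int_\gamma\omega_1\cdots\omega_n$ for $\omega_i\in\mathrm H_1(\Gamma)$ is defined by: for the constant path, $1$ if $n=0$ and $0$ otherwise; for an edge, $\int_e\omega_1\cdots\omega_n=\frac1{n!}\prod_i\int_e\omega_i$; and $\int_{e\gamma}\omega_1\cdots\omega_n=\sum_{i=0}^n\int_e\omega_{i+1}\cdots\omega_n\cdot\int_\gamma\omega_1\cdots\omega_i$ when $s(e)=t(\gamma)$; extended bilinearly (it is well-defined on homotopy classes). $\bigoplus_{m\le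 n}\mathrm H_1(\Gamma)^{\otimes m}$ is the part of tensor length $\le n$ of the shuffle algebra; $\mathrm H^1(\Gamma)^{\otimes m}$ is dual to $\mathrm H_1(\Gamma)^{\otimes m}$. *)

theory Defs
  imports Complex_Main
begin

record ('v, 'e, 'd) graph =
  verts :: "'v set"
  edges :: "'e set"
  hedges :: "'d set"
  src :: "'e \<Rightarrow> 'v"
  hsrc :: "'d \<Rightarrow> 'v"
  einv :: "'e \<Rightarrow> 'e"
  len :: "'e \<Rightarrow> rat"

definition tgt :: "('v, 'e, 'd) graph \<Rightarrow> 'e \<Rightarrow> 'v" where
  "tgt G e = src G (einv G e)"

fun walk :: "('v, 'e, 'd) graph \<Rightarrow> 'v \<Rightarrow> 'e list \<Rightarrow> 'v \<Rightarrow> bool" where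
  "walk G x [] y \<longleftrightarrow> x \<in> verts G \<and> x = y"
| "walk G x (e # es) y \<longleftrightarrow> e \<in> edges G \<and> src G e = x \<and> x \<in> verts G \<and> walk G (tgt G e) es y"

definition connected_graph :: "('v, 'e, 'd) graph \<Rightarrow> bool" where
  "connected_graph G \<longleftrightarrow> (\<forall>x\<in>verts G. \<forall>y\<in>verts G. \<exists>es. walk G x es y)"

definition rat_metrised_graph :: "('v, 'e, 'd) graph \<Rightarrow> bool" where
  "rat_metrised_graph G \<longleftrightarrow>
     finite (verts G) \<and> finite (edges G) \<and> finite (hedges G) \<and> verts G \<noteq> {} \<and>
     src G ` edges G \<subseteq> verts G \<and> hsrc G ` hedges G \<subseteq> verts G \<and>
     (\<forall>e\<in>edges G. einv G e \<in> edges G \<and> einv G (einv G e) = e \<and> einv G e \<noteq> e) \<and>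
     connected_graph G \<and>
     (\<forall>e\<in>edges G. len G e > 0 \<and> len G (einv G e) = len G e)"

definition paths :: "('v, 'e, 'd) graph \<Rightarrow> 'v \<Rightarrow> 'v \<Rightarrow> ('v \<times> 'e list) set" where
  "paths G x y = {(x, es) | es. walk G x es y}"

definition hstep :: "('v, 'e, 'd) graph \<Rightarrow> 'v \<Rightarrow> 'v \<Rightarrow> (('v \<times> 'e list) \<times> ('v \<times> 'e list)) set" where
  "hstep G x y = {(p, q). p \<in> paths G x y \<and> q \<in> paths G x y \<and>
      (\<exists>a e b. e \<in> edges G \<and> snd p = a @ [e, einv G e] @ b \<and> snd q = a @ b)}"

definition homrel :: "('v, 'e, 'd) graph \<Rightarrow> 'v \<Rightarrow> 'v \<Rightarrow> (('v \<times> 'e list) \<times> ('v \<times> 'e list)) set" where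
  "homrel G x y = (hstep G x y \<union> (hstep G x y)\<inverse>)\<^sup>*"

definition pi1 :: "('v, 'e, 'd) graph \<Rightarrow> 'v \<Rightarrow> 'v \<Rightarrow> ('v \<times> 'e list) set set" where
  "pi1 G x y = paths G x y // homrel G x y"

definition hclass :: "('v, 'e, 'd) graph \<Rightarrow> 'v \<Rightarrow> 'v \<Rightarrow> ('v \<times> 'e list) \<Rightarrow> ('v \<times> 'e list) set" where
  "hclass G x y p = homrel G x y `` {p}"

definition rep :: "('v \<times> 'e list) set \<Rightarrow> ('v \<times> 'e list)" where
  "rep c = (SOME p. p \<in> c)"

definition supp :: "('a \<Rightarrow> rat) \<Rightarrow> 'a set" where
  "supp A = {c. A c \<noteq> 0}"

definition QPi :: "('v, 'e, 'd) graph \<Rightarrow> 'v \<Rightarrow> 'v \<Rightarrow> (('v \<times> 'e list) set \<Rightarrow> rat) set" where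
  "QPi G x y = {A. finite (supp A) \<and> supp A \<subseteq> pi1 G x y}"

text \<open>Composition of classes: \<open>a \<cdot> b\<close> means first \<open>b\<close> (from x to y), then \<open>a\<close> (from y to z).\<close>
definition ccomp :: "('v, 'e, 'd) graph \<Rightarrow> 'v \<Rightarrow> 'v \<Rightarrow> ('v \<times> 'e list) set \<Rightarrow> ('v \<times> 'e list) set \<Rightarrow> ('v \<times> 'e list) set" where
  "ccomp G x z a b = hclass G x z (x, snd (rep b) @ snd (rep a))"

definition amul :: "('v, 'e, 'd) graph \<Rightarrow> 'v \<Rightarrow> 'v \<Rightarrow> (('v \<times> 'e list) set \<Rightarrow> rat) \<Rightarrow> (('v \<times> 'e list) set \<Rightarrow> rat) \<Rightarrow> (('v \<times> 'e list) set \<Rightarrow> rat)" where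
  "amul G x z A B = (\<lambda>c. \<Sum>a\<in>supp A. \<Sum>b\<in>supp B. if ccomp G x z a b = c then A a * B b else 0)"

definition augJ :: "('v, 'e, 'd) graph \<Rightarrow> 'v \<Rightarrow> (('v \<times> 'e list) set \<Rightarrow> rat) set" where
  "augJ G u = {B \<in> QPi G u u. (\<Sum>c\<in>supp B. B c) = 0}"

inductive_set rspan :: "('a \<Rightarrow> rat) set \<Rightarrow> ('a \<Rightarrow> rat) set" for S where
  zero: "(\<lambda>_. 0) \<in> rspan S"
| add: "x \<in> S \<Longrightarrow> w \<in> rspan S \<Longrightarrow> (\<lambda>c. a * x c + w c) \<in> rspan S"

text \<open>\<open>Wfilt G u v k\<close> is \<open>W\<^sub>-\<^sub>k = \<rat>\<pi>\<^sub>1(\<Gamma>;u,v) \<cdot> J\<^sup>k\<close>.\<close>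
fun Wfilt :: "('v, 'e, 'd) graph \<Rightarrow> 'v \<Rightarrow> 'v \<Rightarrow> nat \<Rightarrow> (('v \<times> 'e list) set \<Rightarrow> rat) set" where
  "Wfilt G u v 0 = QPi G u v"
| "Wfilt G u v (Suc k) = rspan {amul G u v A B | A B. A \<in> Wfilt G u v k \<and> B \<in> augJ G u}"

text \<open>Elements of \<open>\<rat>\<cdot>E\<^sup>\<plusminus>\<close> as antisymmetric coefficient functions on E;
  \<open>H\<^sub>1(\<Gamma>)\<close> is the space of cycles.\<close>
definition H1 :: "('v, 'e, 'd) graph \<Rightarrow> ('e \<Rightarrow> rat) set" where
  "H1 G = {\<omega>. (\<forall>e. e \<notin> edges G \<longrightarrow> \<omega> e = 0) \<and>
              (\<forall>e\<in>edges G. \<omega> (einv G e) = - \<omega> e) \<and>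
              (\<forall>w\<in>verts G. (\<Sum>e\<in>{e\<in>edges G. src G e = w}. \<omega> e) = 0)}"

definition edge_int :: "('v, 'e, 'd) graph \<Rightarrow> 'e \<Rightarrow> ('e \<Rightarrow> rat) list \<Rightarrow> rat" where
  "edge_int G e ws = prod_list (map (\<lambda>\<omega>. len G e * \<omega> e) ws) / of_nat (fact (length ws))"

text \<open>Recursion on the path with its LAST edge first:
  \<open>\<integral>\<^sub>e\<^sub>\<gamma> \<omega>\<^sub>1\<cdots>\<omega>\<^sub>n = \<Sum>\<^sub>i \<integral>\<^sub>e \<omega>\<^sub>i\<^sub>+\<^sub>1\<cdots>\<omega>\<^sub>n \<cdot> \<integral>\<^sub>\<gamma> \<omega>\<^sub>1\<cdots>\<omega>\<^sub>i\<close>.\<close>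
fun hcp_rev :: "('v, 'e, 'd) graph \<Rightarrow> 'e list \<Rightarrow> ('e \<Rightarrow> rat) list \<Rightarrow> rat" where
  "hcp_rev G [] ws = (if ws = [] then 1 else 0)"
| "hcp_rev G (e # es) ws = (\<Sum>i\<le>length ws. edge_int G e (drop i ws) * hcp_rev G es (take i ws))"

definition hcp :: "('v, 'e, 'd) graph \<Rightarrow> ('v \<times> 'e list) \<Rightarrow> ('e \<Rightarrow> rat) list \<Rightarrow> rat" where
  "hcp G p ws = hcp_rev G (rev (snd p)) ws"

definition aint :: "('v, 'e, 'd) graph \<Rightarrow> (('v \<times> 'e list) set \<Rightarrow> rat) \<Rightarrow> ('e \<Rightarrow> rat) list \<Rightarrow> rat" where
  "aint G A ws = (\<Sum>c\<in>supp A. A c * hcp G (rep c) ws)"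

text \<open>Multilinear functionals on \<open>H\<^sup>m\<close> = linear functionals on \<open>H\<^sup>\<otimes>\<^sup>m\<close>.\<close>
definition multilin :: "('e \<Rightarrow> rat) set \<Rightarrow> nat \<Rightarrow> (('e \<Rightarrow> rat) list \<Rightarrow> rat) \<Rightarrow> bool" where
  "multilin H m \<phi> \<longleftrightarrow>
     (\<forall>ws i a b \<omega> \<omega>'. length ws = m \<and> set ws \<subseteq> H \<and> i < m \<and> \<omega> \<in> H \<and> \<omega>' \<in> H \<longrightarrow>
        \<phi> (ws[i := (\<lambda>e. a * \<omega> e + b * \<omega>' e)]) = a * \<phi> (ws[i := \<omega>]) + b * \<phi> (ws[i := \<omega>']))"

text \<open>Elements of the inverse limit: compatible sequences of lifts \<open>X n\<close> of elements of
  \<open>\<rat>\<pi>\<^sub>1/W\<^sub>-\<^sub>n\<^sub>-\<^sub>1\<close>.\<close>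
definition compat :: "('v, 'e, 'd) graph \<Rightarrow> 'v \<Rightarrow> 'v \<Rightarrow> (nat \<Rightarrow> ('v \<times> 'e list) set \<Rightarrow> rat) \<Rightarrow> bool" where
  "compat G u v X \<longleftrightarrow> (\<forall>n. X n \<in> QPi G u v \<and> (\<lambda>c. X (Suc n) c - X n c) \<in> Wfilt G u v (Suc n))"

end

theory Submission
  imports Defs
begin


definition conv :: "(('e \<Rightarrow> rat) list \<Rightarrow> rat) \<Rightarrow> (('e \<Rightarrow> rat) list \<Rightarrow> rat) \<Rightarrow> ('e \<Rightarrow> rat) list \<Rightarrow> rat" where
  "conv F H ws = (\<Sum>i\<le>length ws. F (drop i ws) * H (take i ws))"

lemma tri_swap:
  fixes g :: "nat \<Rightarrow> nat \<Rightarrow> rat"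
  shows "(\<Sum>i\<le>n. \<Sum>j\<le>i. g j (i - j)) = (\<Sum>j\<le>n. \<Sum>k\<le>n - j. g j k)"
proof -
  have "(\<Sum>i\<le>n. \<Sum>j\<le>i. g j (i - j)) = (\<Sum>(j,k)\<in>{(j,k). j+k \<le> n}. g j k)"
    by (rule sum.triangle_reindex_eq[symmetric])
  also have "{(j,k). j+k \<le> n} = Sigma {..n} (\<lambda>j. {..n-j})" by auto
  also have "(\<Sum>(j,k)\<in>Sigma {..n} (\<lambda>j. {..n-j}). g j k) = (\<Sum>j\<le>n. \<Sum>k\<le>n - j. g j k)"
    by (rule sum.Sigma[symmetric]) auto
  finally show ?thesis .
qed

lemma hcp_rev_Nil_iff: "hcp_rev G [] ws = (if ws = [] then 1 else 0)" by simp

lemma conv_unit_left: "conv (\<lambda>ws. if ws = [] then 1 else 0) H ws = H ws"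
proof -
  have "conv (\<lambda>ws. if ws = [] then 1 else 0) H ws = (\<Sum>i\<in>{length ws}. H (take i ws))"
    unfolding conv_def by (rule sum.mono_neutral_cong_right) auto
  then show ?thesis by simp
qed

lemma conv_unit_right: "conv F (\<lambda>ws. if ws = [] then 1 else 0) ws = F ws"
proof -
  have "conv F (\<lambda>ws. if ws = [] then 1 else 0) ws = (\<Sum>i\<in>{0}. F (drop i ws))"
    unfolding conv_def by (rule sum.mono_neutral_cong_right) auto
  then show ?thesis by simp
qed

lemma hcp_rev_append: "hcp_rev G (xs @ ys) ws = conv (hcp_rev G xs) (hcp_rev G ys) ws"
proof (induction xs arbitrary: ws)
  case Nil
  show ?case using conv_unit_left[of "hcp_rev G ys" ws] by (simp add: hcp_rev_Nil_iff[abs_def])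
next
  case (Cons e xs)
  let ?n = "length ws"
  let ?E = "edge_int G e"
  define g where "g j k = ?E (drop (j+k) ws) * hcp_rev G xs (take k (drop j ws)) * hcp_rev G ys (take j ws)" for j k
  have "hcp_rev G ((e#xs) @ ys) ws = (\<Sum>i\<le>?n. ?E (drop i ws) * conv (hcp_rev G xs) (hcp_rev G ys) (take i ws))"
    using Cons by simp
  also have "\<dots> = (\<Sum>i\<le>?n. \<Sum>j\<le>i. g j (i - j))"
  proof (rule sum.cong[OF refl])
    fix i assume i: "i \<in> {..?n}"
    have "?E (drop i ws) * conv (hcp_rev G xs) (hcp_rev G ys) (take i ws)
       = (\<Sum>j\<le>i. ?E (drop i ws) * (hcp_rev G xs (drop j (take i ws)) * hcp_rev G ys (take j (take i ws))))"
      using i by (simp add: conv_def sum_distrib_left min_def)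
    also have "\<dots> = (\<Sum>j\<le>i. g j (i - j))"
      by (rule sum.cong[OF refl]) (simp add: g_def drop_take min_def)
    finally show "?E (drop i ws) * conv (hcp_rev G xs) (hcp_rev G ys) (take i ws) = (\<Sum>j\<le>i. g j (i - j))" .
  qed
  also have "\<dots> = (\<Sum>j\<le>?n. \<Sum>k\<le>?n - j. g j k)" by (rule tri_swap)
  also have "\<dots> = conv (hcp_rev G (e#xs)) (hcp_rev G ys) ws"
    unfolding conv_def
    by (rule sum.cong[OF refl]) (simp add: g_def sum_distrib_right add.commute)
  finally show ?case .
qed


locale RG =
  fixes G :: "('v, 'e, 'd) graph"
  assumes wf: "rat_metrised_graph G"
begin

declare hcp_rev.simps(2)[simp del]

lemma einv_edge: "e \<in> edges G \<Longrightarrow> einv G e \<in> edges G"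
  using wf unfolding rat_metrised_graph_def by blast
lemma einv_einv[simp]: "e \<in> edges G \<Longrightarrow> einv G (einv G e) = e"
  using wf unfolding rat_metrised_graph_def by blast
lemma einv_neq: "e \<in> edges G \<Longrightarrow> einv G e \<noteq> e"
  using wf unfolding rat_metrised_graph_def by blast
lemma len_einv[simp]: "e \<in> edges G \<Longrightarrow> len G (einv G e) = len G e"
  using wf unfolding rat_metrised_graph_def by blast
lemma len_pos: "e \<in> edges G \<Longrightarrow> len G e > 0"
  using wf unfolding rat_metrised_graph_def by blast
lemma fin_E: "finite (edges G)" and fin_V: "finite (verts G)"
  using wf unfolding rat_metrised_graph_def by blast+
lemma src_V: "e \<in> edges G \<Longrightarrow> src G e \<in> verts G"
  using wf unfolding rat_metrised_graph_def by blast
lemma tgt_V: "e \<in> edges G \<Longrightarrow> tgt G e \<in> verts G"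
  unfolding tgt_def using src_V einv_edge by blast
lemma conn: "x \<in> verts G \<Longrightarrow> y \<in> verts G \<Longrightarrow> \<exists>es. walk G x es y"
  using wf unfolding rat_metrised_graph_def connected_graph_def by blast
lemma tgt_einv[simp]: "e \<in> edges G \<Longrightarrow> tgt G (einv G e) = src G e"
  unfolding tgt_def by simp

lemma H1_zero: "\<omega> \<in> H1 G \<Longrightarrow> e \<notin> edges G \<Longrightarrow> \<omega> e = 0"
  unfolding H1_def by blast
lemma H1_anti: "\<omega> \<in> H1 G \<Longrightarrow> e \<in> edges G \<Longrightarrow> \<omega> (einv G e) = - \<omega> e"
  unfolding H1_def by blast
lemma H1_vert: "\<omega> \<in> H1 G \<Longrightarrow> w \<in> verts G \<Longrightarrow> (\<Sum>e\<in>{e\<in>edges G. src G e = w}. \<omega> e) = 0"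
  unfolding H1_def by blast

lemma edge_int_einv:
  assumes e: "e \<in> edges G" and ws: "set ws \<subseteq> H1 G"
  shows "edge_int G (einv G e) ws = (-1) ^ length ws * edge_int G e ws"
proof -
  have "prod_list (map (\<lambda>\<omega>. len G (einv G e) * \<omega> (einv G e)) ws) = (-1) ^ length ws * prod_list (map (\<lambda>\<omega>. len G e * \<omega> e) ws)"
    using ws
  proof (induction ws)
    case (Cons a ws)
    then show ?case using H1_anti[of a e] e by simp
  qed simp
  then show ?thesis unfolding edge_int_def by simp
qed

lemma hcp_rev_single: "hcp_rev G [e] ws = edge_int G e ws"
proof -
  have "hcp_rev G [e] ws = (\<Sum>i\<le>length ws. edge_int G e (drop i ws) * (if i = 0 \<or> ws = [] then 1 else 0))"
    by (simp add: hcp_rev.simps(2))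
  also have "\<dots> = (\<Sum>i\<in>{0}. edge_int G e (drop i ws) * (if i = 0 \<or> ws = [] then 1 else 0))"
    by (rule sum.mono_neutral_right) auto
  finally show ?thesis by simp
qed

lemma edge_int_split: "i \<le> length ws \<Longrightarrow>
  edge_int G e (drop i ws) * edge_int G e (take i ws)
   = edge_int G e ws * of_nat (length ws choose i)"
proof -
  assume i: "i \<le> length ws"
  define f where "f = (\<lambda>\<omega>::'e\<Rightarrow>rat. len G e * \<omega> e)"
  define Pd where "Pd = prod_list (map f (drop i ws))"
  define Pt where "Pt = prod_list (map f (take i ws))"
  have p: "prod_list (map f ws) = Pt * Pd"
    unfolding Pd_def Pt_def by (metis append_take_drop_id map_append prod_list.append)
  have c: "(of_nat (length ws choose i) :: rat) = fact (length ws) / (fact i * fact (length ws - i))"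
    using binomial_fact[OF i] by simp
  have l1: "length (drop i ws) = length ws - i" "length (take i ws) = i" using i by auto
  have "edge_int G e (drop i ws) * edge_int G e (take i ws) = (Pd / fact (length ws - i)) * (Pt / fact i)"
    unfolding edge_int_def f_def[symmetric] Pd_def Pt_def l1 by simp
  also have "\<dots> = (Pt * Pd) / fact (length ws) * (fact (length ws) / (fact i * fact (length ws - i)))"
    by (simp add: field_simps)
  also have "\<dots> = edge_int G e ws * of_nat (length ws choose i)"
    unfolding edge_int_def f_def[symmetric] p[symmetric] c by simp
  finally show ?thesis .
qed

lemma hcp_rev_backtrack:
  assumes e: "e \<in> edges G" and ws: "set ws \<subseteq> H1 G"
  shows "hcp_rev G [einv G e, e] ws = (if ws = [] then 1 else 0)"
proof -
  let ?n = "length ws"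
  have "hcp_rev G [einv G e, e] ws = (\<Sum>i\<le>?n. edge_int G (einv G e) (drop i ws) * edge_int G e (take i ws))"
    by (simp only: hcp_rev.simps(2)[of G "einv G e" "[e]"] hcp_rev_single length_Cons list.size)
  also have "\<dots> = (\<Sum>i\<le>?n. (-1) ^ (?n - i) * (edge_int G e ws * of_nat (?n choose i)))"
  proof (rule sum.cong[OF refl])
    fix i assume "i \<in> {..?n}"
    moreover have "set (drop i ws) \<subseteq> H1 G" using ws by (meson order_trans set_drop_subset)
    ultimately show "edge_int G (einv G e) (drop i ws) * edge_int G e (take i ws) = (-1) ^ (?n - i) * (edge_int G e ws * of_nat (?n choose i))"
      using edge_int_einv[OF e, of "drop i ws"] edge_int_split[of i ws e] by simp
  qed
  also have "\<dots> = edge_int G e ws * (-1)^?n * (\<Sum>i\<le>?n. (-1) ^ i * of_nat (?n choose i))"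
  proof -
    have "\<And>i. i \<le> ?n \<Longrightarrow> (-1::rat) ^ (?n - i) = (-1)^?n * (-1)^i"
    proof -
      fix i assume "i \<le> ?n"
      then have "(-1::rat)^?n = (-1)^(?n - i) * (-1)^i" by (metis le_add_diff_inverse2 power_add)
      then have "(-1::rat)^?n * (-1)^i = (-1)^(?n - i) * ((-1)^i * (-1)^i)" by simp
      also have "(-1::rat)^i * (-1)^i = 1" by (simp flip: power_add)
      finally show "(-1::rat) ^ (?n - i) = (-1)^?n * (-1)^i" by simp
    qed
    then show ?thesis by (simp add: sum_distrib_left mult_ac)
  qed
  also have "\<dots> = (if ws = [] then 1 else 0)"
  proof (cases "ws = []")
    case True then show ?thesis by (simp add: edge_int_def)
  next
    case False
    then have "?n > 0" by simp
    then show ?thesis using choose_alternating_sum[of ?n, where 'a=rat] False by simp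
  qed
  finally show ?thesis .
qed

lemma conv_cong_H1:
  assumes "set ws \<subseteq> H1 G"
    and "\<And>zs. set zs \<subseteq> H1 G \<Longrightarrow> F zs = F' zs"
    and "\<And>zs. set zs \<subseteq> H1 G \<Longrightarrow> H zs = H' zs"
  shows "conv F H ws = conv F' H' ws"
  unfolding conv_def
proof (rule sum.cong[OF refl])
  fix i
  have "set (drop i ws) \<subseteq> H1 G" "set (take i ws) \<subseteq> H1 G"
    using assms(1) by (meson order_trans set_drop_subset set_take_subset)+
  then show "F (drop i ws) * H (take i ws) = F' (drop i ws) * H' (take i ws)" using assms by simp
qed

lemma hcp_rev_bt_mid:
  assumes e: "e \<in> edges G" and ws: "set ws \<subseteq> H1 G"
  shows "hcp_rev G (rev b @ [einv G e, e] @ rev a) ws = hcp_rev G (rev b @ rev a) ws"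
proof -
  have inner: "hcp_rev G ([einv G e, e] @ rev a) zs = hcp_rev G (rev a) zs" if "set zs \<subseteq> H1 G" for zs
  proof -
    have "hcp_rev G ([einv G e, e] @ rev a) zs = conv (hcp_rev G [einv G e, e]) (hcp_rev G (rev a)) zs"
      by (rule hcp_rev_append)
    also have "\<dots> = conv (\<lambda>ws. if ws = [] then 1 else 0) (hcp_rev G (rev a)) zs"
      by (rule conv_cong_H1[OF that]) (auto simp: hcp_rev_backtrack[OF e])
    also have "\<dots> = hcp_rev G (rev a) zs" by (rule conv_unit_left)
    finally show ?thesis .
  qed
  show ?thesis
    unfolding hcp_rev_append[of G "rev b"]
    by (rule conv_cong_H1[OF ws]) (use inner in auto)
qed

lemma hcp_hstep:
  assumes "(p, q) \<in> hstep G x y" "set ws \<subseteq> H1 G"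
  shows "hcp G p ws = hcp G q ws"
proof -
  from assms(1) obtain a e b where e: "e \<in> edges G" and p: "snd p = a @ [e, einv G e] @ b" and q: "snd q = a @ b"
    unfolding hstep_def by blast
  have "rev (snd p) = rev b @ [einv G e, e] @ rev a" using p by simp
  then show ?thesis unfolding hcp_def using q hcp_rev_bt_mid[OF e assms(2), of b a] by simp
qed

lemma hcp_homrel:
  assumes "(p, q) \<in> homrel G x y" "set ws \<subseteq> H1 G"
  shows "hcp G p ws = hcp G q ws"
  using assms(1) unfolding homrel_def
proof (induction rule: rtrancl_induct)
  case (step q r)
  then have "hcp G q ws = hcp G r ws"
    using hcp_hstep[OF _ assms(2), of q r x y] hcp_hstep[OF _ assms(2), of r q x y] by auto
  then show ?case using step.IH by simp
qed simp

end


definition rp :: "('v, 'e, 'd) graph \<Rightarrow> 'e list \<Rightarrow> 'e list" where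
  "rp G t = rev (map (einv G) t)"

lemma rp_Nil[simp]: "rp G [] = []" and rp_Cons[simp]: "rp G (e # t) = rp G t @ [einv G e]"
  and rp_append[simp]: "rp G (a @ b) = rp G b @ rp G a"
  by (auto simp: rp_def)

context RG begin

lemma walk_append: "walk G x (p @ q) z \<longleftrightarrow> (\<exists>y. walk G x p y \<and> walk G y q z)"
proof (induction p arbitrary: x)
  case Nil
  show ?case by (cases q) auto
qed auto

lemma walk_end_unique: "walk G x p y \<Longrightarrow> walk G x p y' \<Longrightarrow> y = y'"
  by (induction p arbitrary: x) auto

lemma walk_V: "walk G x p y \<Longrightarrow> x \<in> verts G \<and> y \<in> verts G"
  by (induction p arbitrary: x) force+

lemma walk_E: "walk G x p y \<Longrightarrow> set p \<subseteq> edges G"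
  by (induction p arbitrary: x) auto

lemma walk_rp: "walk G x t y \<Longrightarrow> walk G y (rp G t) x"
proof (induction t arbitrary: x)
  case Nil then show ?case by auto
next
  case (Cons e t)
  then have e: "e \<in> edges G" "src G e = x" "x \<in> verts G" "walk G (tgt G e) t y" by auto
  have "walk G y (rp G t) (tgt G e)" using Cons.IH e(4) .
  moreover have "walk G (tgt G e) [einv G e] x"
    using e einv_edge[OF e(1)] tgt_V[OF e(1)] by (simp add: tgt_def)
  ultimately show ?case by (auto simp: walk_append)
qed

lemma rp_rp: "set t \<subseteq> edges G \<Longrightarrow> rp G (rp G t) = t"
  by (induction t) (auto simp: rp_def)

lemma set_rp: "set t \<subseteq> edges G \<Longrightarrow> set (rp G t) \<subseteq> edges G"
  by (auto simp: rp_def einv_edge)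

lemma paths_iff: "p \<in> paths G x y \<longleftrightarrow> fst p = x \<and> walk G x (snd p) y"
  unfolding paths_def by (cases p) auto

lemma hstep_paths: "(p, q) \<in> hstep G x y \<Longrightarrow> p \<in> paths G x y \<and> q \<in> paths G x y"
  unfolding hstep_def by blast

lemma equiv_homrel: "equiv UNIV (homrel G x y)"
proof -
  have "sym ((hstep G x y \<union> (hstep G x y)\<inverse>)\<^sup>*)"
    by (rule sym_rtrancl) (auto simp: sym_def)
  moreover have "trans ((hstep G x y \<union> (hstep G x y)\<inverse>)\<^sup>*)" by (rule trans_rtrancl)
  ultimately show ?thesis unfolding homrel_def equiv_def refl_on_def by auto
qed

lemma homrel_refl: "(p, p) \<in> homrel G x y"
  unfolding homrel_def by simp
lemma homrel_sym: "(p, q) \<in> homrel G x y \<Longrightarrow> (q, p) \<in> homrel G x y"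
  using equiv_homrel unfolding equiv_def sym_def by blast
lemma homrel_trans: "(p, q) \<in> homrel G x y \<Longrightarrow> (q, r) \<in> homrel G x y \<Longrightarrow> (p, r) \<in> homrel G x y"
  using equiv_homrel unfolding equiv_def trans_def by blast

lemma homrel_paths: "(p, q) \<in> homrel G x y \<Longrightarrow> p \<in> paths G x y \<Longrightarrow> q \<in> paths G x y"
  unfolding homrel_def
  by (induction rule: rtrancl_induct) (auto dest: hstep_paths)

lemma hclass_eq_iff: "hclass G x y p = hclass G x y q \<longleftrightarrow> (p, q) \<in> homrel G x y"
  unfolding hclass_def using eq_equiv_class_iff[OF equiv_homrel] by blast

lemma pi1_iff: "c \<in> pi1 G x y \<longleftrightarrow> (\<exists>p\<in>paths G x y. c = hclass G x y p)"
  unfolding pi1_def quotient_def hclass_def by blast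

lemma hclass_in_pi1: "p \<in> paths G x y \<Longrightarrow> hclass G x y p \<in> pi1 G x y"
  using pi1_iff by blast

lemma rep_hclass: "(p, rep (hclass G x y p)) \<in> homrel G x y"
proof -
  have "p \<in> hclass G x y p" unfolding hclass_def using homrel_refl by blast
  then have "rep (hclass G x y p) \<in> hclass G x y p" unfolding rep_def by (rule someI)
  then show ?thesis unfolding hclass_def by blast
qed

lemma rep_pi1:
  assumes "c \<in> pi1 G x y"
  shows "rep c \<in> paths G x y" "c = hclass G x y (rep c)" "fst (rep c) = x" "walk G x (snd (rep c)) y"
proof -
  obtain p where p: "p \<in> paths G x y" "c = hclass G x y p" using assms pi1_iff by blast
  have r: "(p, rep c) \<in> homrel G x y" using rep_hclass p(2) by simp
  show "rep c \<in> paths G x y" using homrel_paths[OF r p(1)] .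
  show "c = hclass G x y (rep c)" using r p(2) hclass_eq_iff by blast
  show "fst (rep c) = x" "walk G x (snd (rep c)) y" using homrel_paths[OF r p(1)] paths_iff by blast+
qed

lemma bt_walk: "walk G x (a @ [e, einv G e] @ b) y \<Longrightarrow> walk G x (a @ b) y"
  by (auto simp: walk_append)

lemma hstep_intro:
  assumes "p \<in> paths G x y" "q \<in> paths G x y" "e \<in> edges G" "snd p = a @ [e, einv G e] @ b" "snd q = a @ b"
  shows "(p, q) \<in> hstep G x y"
  unfolding hstep_def using assms by blast

lemma cong_pre:
  assumes "(p, q) \<in> homrel G y z" "p \<in> paths G y z" "walk G x r y"
  shows "((x, r @ snd p), (x, r @ snd q)) \<in> homrel G x z"
  using assms(1,2) unfolding homrel_def
proof (induction rule: rtrancl_induct)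
  case base then show ?case by simp
next
  case (step q q')
  have qp: "q \<in> paths G y z" using step.hyps(1) step.prems homrel_paths unfolding homrel_def by blast
  have st: "((x, r @ snd q), (x, r @ snd q')) \<in> hstep G x z \<or> ((x, r @ snd q'), (x, r @ snd q)) \<in> hstep G x z"
  proof (cases "(q, q') \<in> hstep G y z")
    case True
    then obtain a e b where ab: "e \<in> edges G" "snd q = a @ [e, einv G e] @ b" "snd q' = a @ b" "q' \<in> paths G y z"
      unfolding hstep_def by blast
    have "((x, r @ snd q), (x, r @ snd q')) \<in> hstep G x z"
      by (rule hstep_intro[where a="r @ a" and b=b and e=e]) (use ab qp assms(3) in \<open>auto simp: paths_iff walk_append\<close>)
    then show ?thesis by blast
  next
    case False
    then have h: "(q', q) \<in> hstep G y z" using step.hyps(2) by blast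
    then obtain a e b where ab: "e \<in> edges G" "snd q' = a @ [e, einv G e] @ b" "snd q = a @ b" "q' \<in> paths G y z"
      unfolding hstep_def by blast
    have "((x, r @ snd q'), (x, r @ snd q)) \<in> hstep G x z"
      by (rule hstep_intro[where a="r @ a" and b=b and e=e]) (use ab qp assms(3) in \<open>auto simp: paths_iff walk_append\<close>)
    then show ?thesis by blast
  qed
  then have "((x, r @ snd q), (x, r @ snd q')) \<in> (hstep G x z \<union> (hstep G x z)\<inverse>)\<^sup>*" by blast
  with step.IH[OF step.prems] show ?case by (meson rtrancl_trans)
qed

lemma cong_post:
  assumes "(p, q) \<in> homrel G x y" "p \<in> paths G x y" "walk G y r z"
  shows "((x, snd p @ r), (x, snd q @ r)) \<in> homrel G x z"
  using assms(1,2) unfolding homrel_def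
proof (induction rule: rtrancl_induct)
  case base then show ?case by simp
next
  case (step q q')
  have qp: "q \<in> paths G x y" using step.hyps(1) step.prems homrel_paths unfolding homrel_def by blast
  have st: "((x, snd q @ r), (x, snd q' @ r)) \<in> hstep G x z \<or> ((x, snd q' @ r), (x, snd q @ r)) \<in> hstep G x z"
  proof (cases "(q, q') \<in> hstep G x y")
    case True
    then obtain a e b where ab: "e \<in> edges G" "snd q = a @ [e, einv G e] @ b" "snd q' = a @ b" "q' \<in> paths G x y"
      unfolding hstep_def by blast
    have "((x, snd q @ r), (x, snd q' @ r)) \<in> hstep G x z"
      by (rule hstep_intro[where a=a and b="b @ r" and e=e]) (use ab qp assms(3) in \<open>auto simp: paths_iff walk_append\<close>)
    then show ?thesis by blast
  next
    case False
    then have h: "(q', q) \<in> hstep G x y" using step.hyps(2) by blast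
    then obtain a e b where ab: "e \<in> edges G" "snd q' = a @ [e, einv G e] @ b" "snd q = a @ b" "q' \<in> paths G x y"
      unfolding hstep_def by blast
    have "((x, snd q' @ r), (x, snd q @ r)) \<in> hstep G x z"
      by (rule hstep_intro[where a=a and b="b @ r" and e=e]) (use ab qp assms(3) in \<open>auto simp: paths_iff walk_append\<close>)
    then show ?thesis by blast
  qed
  then have "((x, snd q @ r), (x, snd q' @ r)) \<in> (hstep G x z \<union> (hstep G x z)\<inverse>)\<^sup>*" by blast
  with step.IH[OF step.prems] show ?case by (meson rtrancl_trans)
qed

lemma ccomp_hclass:
  assumes p: "p \<in> paths G x y" and q: "q \<in> paths G y z"
  shows "ccomp G x z (hclass G y z q) (hclass G x y p) = hclass G x z (x, snd p @ snd q)"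
proof -
  define p' where "p' = rep (hclass G x y p)"
  define q' where "q' = rep (hclass G y z q)"
  have pp: "(p, p') \<in> homrel G x y" unfolding p'_def by (rule rep_hclass)
  have qq: "(q, q') \<in> homrel G y z" unfolding q'_def by (rule rep_hclass)
  have p'p: "p' \<in> paths G x y" using homrel_paths[OF pp p] .
  have q'p: "q' \<in> paths G y z" using homrel_paths[OF qq q] .
  have wq': "walk G y (snd q') z" using q'p paths_iff by blast
  have wp: "walk G x (snd p) y" using p paths_iff by blast
  have 1: "((x, snd p' @ snd q'), (x, snd p @ snd q')) \<in> homrel G x z"
    using cong_post[OF homrel_sym[OF pp] p'p wq'] p'p by (simp add: paths_iff)
  have 2: "((x, snd p @ snd q'), (x, snd p @ snd q)) \<in> homrel G x z"
    using cong_pre[OF homrel_sym[OF qq] q'p wp] .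
  have "((x, snd p' @ snd q'), (x, snd p @ snd q)) \<in> homrel G x z"
    using homrel_trans[OF 1 2] .
  then show ?thesis unfolding ccomp_def p'_def[symmetric] q'_def[symmetric] hclass_eq_iff .
qed

lemma cancel_rp:
  assumes "walk G x (a @ t @ rp G t @ b) y" "set t \<subseteq> edges G"
  shows "((x, a @ t @ rp G t @ b), (x, a @ b)) \<in> homrel G x y"
  using assms
proof (induction t arbitrary: a b)
  case Nil then show ?case by (simp add: homrel_refl)
next
  case (Cons e t)
  have eq: "a @ (e # t) @ rp G (e # t) @ b = (a @ [e]) @ t @ rp G t @ ([einv G e] @ b)" by simp
  have "((x, (a @ [e]) @ t @ rp G t @ ([einv G e] @ b)), (x, (a @ [e]) @ ([einv G e] @ b))) \<in> homrel G x y"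
    using Cons.IH[of "a @ [e]" "[einv G e] @ b"] Cons.prems eq by simp
  moreover have "((x, a @ [e, einv G e] @ b), (x, a @ b)) \<in> homrel G x y"
  proof -
    have w1: "walk G x (a @ [e, einv G e] @ b) y"
      using homrel_paths[OF calculation] Cons.prems(1) eq by (simp add: paths_iff)
    have "((x, a @ [e, einv G e] @ b), (x, a @ b)) \<in> hstep G x y"
      unfolding hstep_def using w1 bt_walk[OF w1] Cons.prems(2) by (auto simp: paths_iff)
    then show ?thesis unfolding homrel_def by blast
  qed
  ultimately show ?case using eq homrel_trans by (metis append.assoc append_Cons append_Nil)
qed

lemma cancel_rp':
  assumes "walk G x (a @ rp G t @ t @ b) y" "set t \<subseteq> edges G"
  shows "((x, a @ rp G t @ t @ b), (x, a @ b)) \<in> homrel G x y"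
  using cancel_rp[of x a "rp G t" b y] assms rp_rp set_rp by simp

end


definition delta :: "'c \<Rightarrow> 'c \<Rightarrow> rat" where
  "delta a = (\<lambda>x. if x = a then 1 else 0)"

definition gmul :: "('c \<Rightarrow> 'c \<Rightarrow> 'c) \<Rightarrow> ('c \<Rightarrow> rat) \<Rightarrow> ('c \<Rightarrow> rat) \<Rightarrow> 'c \<Rightarrow> rat" where
  "gmul f A B = (\<lambda>c. \<Sum>a\<in>supp A. \<Sum>b\<in>supp B. if f a b = c then A a * B b else 0)"

definition lf :: "('c \<Rightarrow> rat) \<Rightarrow> ('c \<Rightarrow> rat) \<Rightarrow> rat" where
  "lf g A = (\<Sum>c\<in>supp A. A c * g c)"

abbreviation fs :: "('c \<Rightarrow> rat) \<Rightarrow> bool" where "fs A \<equiv> finite (supp A)"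

lemma amul_gmul: "amul G x z = gmul (ccomp G x z)"
  by (intro ext) (simp add: amul_def gmul_def)

lemma aint_lf: "aint G A ws = lf (\<lambda>c. hcp G (rep c) ws) A"
  by (simp add: aint_def lf_def)

lemma ifz_mult: "(if P then x else 0) * (y::rat) = (if P then x * y else 0)" by simp
lemma mult_ifz: "(y::rat) * (if P then x else 0) = (if P then y * x else 0)" by simp
lemma ifz_lin: "(if P then (s * x + y) * (z::rat) else 0) = s * (if P then x * z else 0) + (if P then y * z else 0)"
  by (simp add: algebra_simps)
lemma ifz_lin2: "(if P then z * (s * x + y) else (0::rat)) = s * (if P then z * x else 0) + (if P then z * y else 0)"
  by (simp add: algebra_simps)

lemma supp_iff: "c \<in> supp A \<longleftrightarrow> A c \<noteq> 0" by (simp add: supp_def)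

lemma lf_super: "finite S \<Longrightarrow> supp A \<subseteq> S \<Longrightarrow> lf g A = (\<Sum>c\<in>S. A c * g c)"
  unfolding lf_def by (rule sum.mono_neutral_left) (auto simp: supp_def)

lemma gmul_super:
  assumes "finite S" "supp A \<subseteq> S" "finite T" "supp B \<subseteq> T"
  shows "gmul f A B c = (\<Sum>a\<in>S. \<Sum>b\<in>T. if f a b = c then A a * B b else 0)"
proof -
  have "gmul f A B c = (\<Sum>a\<in>S. \<Sum>b\<in>supp B. if f a b = c then A a * B b else 0)"
    unfolding gmul_def
  proof (rule sum.mono_neutral_left)
    show "\<forall>i\<in>S - supp A. (\<Sum>b\<in>supp B. if f i b = c then A i * B b else 0) = 0"
    proof
      fix i assume "i \<in> S - supp A"
      then have "A i = 0" by (simp add: supp_def)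
      then show "(\<Sum>b\<in>supp B. if f i b = c then A i * B b else 0) = 0"
        by (simp only: mult_zero_left if_cancel sum.neutral_const)
    qed
  qed (use assms in auto)
  also have "\<dots> = (\<Sum>a\<in>S. \<Sum>b\<in>T. if f a b = c then A a * B b else 0)"
    by (rule sum.cong[OF refl], rule sum.mono_neutral_left) (use assms in \<open>auto simp: supp_def\<close>)
  finally show ?thesis .
qed

lemma supp_gmul: "supp (gmul f A B) \<subseteq> (\<lambda>(a, b). f a b) ` (supp A \<times> supp B)"
proof
  fix c assume c: "c \<in> supp (gmul f A B)"
  show "c \<in> (\<lambda>(a, b). f a b) ` (supp A \<times> supp B)"
  proof (rule ccontr)
    assume n: "c \<notin> (\<lambda>(a, b). f a b) ` (supp A \<times> supp B)"
    have "gmul f A B c = 0"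
      unfolding gmul_def
    proof (intro sum.neutral ballI)
      fix a b assume "a \<in> supp A" "b \<in> supp B"
      then have "f a b \<noteq> c" using n by force
      then show "(if f a b = c then A a * B b else 0) = 0" by simp
    qed
    then show False using c by (simp add: supp_def)
  qed
qed

lemma fs_gmul: "fs A \<Longrightarrow> fs B \<Longrightarrow> fs (gmul f A B)"
  by (rule finite_subset[OF supp_gmul]) auto

lemma supp_lin: "supp (\<lambda>c. s * X c + Y c) \<subseteq> supp X \<union> supp Y"
  by (auto simp: supp_def)

lemma fs_lin: "fs X \<Longrightarrow> fs Y \<Longrightarrow> fs (\<lambda>c. s * X c + Y c)"
  by (rule finite_subset[OF supp_lin]) auto

lemma supp_zero[simp]: "supp (\<lambda>_. 0) = {}" by (simp add: supp_def)

lemma supp_delta[simp]: "supp (delta a) = {a}" by (auto simp: supp_def delta_def)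

lemma lf_lin:
  assumes "fs X" "fs Y"
  shows "lf g (\<lambda>c. s * X c + Y c) = s * lf g X + lf g Y"
proof -
  let ?S = "supp X \<union> supp Y"
  have "lf g (\<lambda>c. s * X c + Y c) = (\<Sum>c\<in>?S. (s * X c + Y c) * g c)"
    by (rule lf_super) (use assms supp_lin[of s X Y] in auto)
  also have "\<dots> = s * (\<Sum>c\<in>?S. X c * g c) + (\<Sum>c\<in>?S. Y c * g c)"
    by (simp only: distrib_right sum.distrib sum_distrib_left mult.assoc)
  also have "\<dots> = s * lf g X + lf g Y"
    using lf_super[of ?S X g] lf_super[of ?S Y g] assms by auto
  finally show ?thesis .
qed

lemma lf_zero[simp]: "lf g (\<lambda>_. 0) = 0" by (simp add: lf_def)

lemma lf_delta[simp]: "lf g (delta a) = g a" unfolding lf_def supp_delta by (simp add: delta_def)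

lemma lf_cong: "(\<And>c. c \<in> supp A \<Longrightarrow> g c = g' c) \<Longrightarrow> lf g A = lf g' A"
  unfolding lf_def by simp

lemma gmul_lin_left:
  assumes "fs X" "fs Y" "fs B"
  shows "gmul f (\<lambda>c. s * X c + Y c) B = (\<lambda>c. s * gmul f X B c + gmul f Y B c)"
proof
  fix c
  let ?S = "supp X \<union> supp Y"
  have "gmul f (\<lambda>c. s * X c + Y c) B c = (\<Sum>a\<in>?S. \<Sum>b\<in>supp B. if f a b = c then (s * X a + Y a) * B b else 0)"
    by (rule gmul_super) (use assms supp_lin[of s X Y] in auto)
  also have "\<dots> = s * (\<Sum>a\<in>?S. \<Sum>b\<in>supp B. if f a b = c then X a * B b else 0) + (\<Sum>a\<in>?S. \<Sum>b\<in>supp B. if f a b = c then Y a * B b else 0)"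
    by (simp only: ifz_lin sum.distrib sum_distrib_left)
  also have "\<dots> = s * gmul f X B c + gmul f Y B c"
    using gmul_super[of ?S X "supp B" B f c] gmul_super[of ?S Y "supp B" B f c] assms by auto
  finally show "gmul f (\<lambda>c. s * X c + Y c) B c = s * gmul f X B c + gmul f Y B c" .
qed

lemma gmul_lin_right:
  assumes "fs X" "fs Y" "fs A"
  shows "gmul f A (\<lambda>c. s * X c + Y c) = (\<lambda>c. s * gmul f A X c + gmul f A Y c)"
proof
  fix c
  let ?S = "supp X \<union> supp Y"
  have "gmul f A (\<lambda>c. s * X c + Y c) c = (\<Sum>a\<in>supp A. \<Sum>b\<in>?S. if f a b = c then A a * (s * X b + Y b) else 0)"
    by (rule gmul_super) (use assms supp_lin[of s X Y] in auto)
  also have "\<dots> = s * (\<Sum>a\<in>supp A. \<Sum>b\<in>?S. if f a b = c then A a * X b else 0) + (\<Sum>a\<in>supp A. \<Sum>b\<in>?S. if f a b = c then A a * Y b else 0)"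
    by (simp only: ifz_lin2 sum.distrib sum_distrib_left)
  also have "\<dots> = s * gmul f A X c + gmul f A Y c"
    using gmul_super[of "supp A" A ?S X f c] gmul_super[of "supp A" A ?S Y f c] assms by auto
  finally show "gmul f A (\<lambda>c. s * X c + Y c) c = s * gmul f A X c + gmul f A Y c" .
qed

lemma gmul_zero_left[simp]: "gmul f (\<lambda>_. 0) B = (\<lambda>_. 0)" by (simp add: gmul_def)
lemma gmul_zero_right[simp]: "gmul f A (\<lambda>_. 0) = (\<lambda>_. 0)" by (simp add: gmul_def)

lemma lf_gmul:
  assumes "fs A" "fs B"
  shows "lf g (gmul f A B) = (\<Sum>a\<in>supp A. \<Sum>b\<in>supp B. A a * B b * g (f a b))"
proof -
  let ?D = "(\<lambda>(a, b). f a b) ` (supp A \<times> supp B)"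
  have fD: "finite ?D" using assms by auto
  have "lf g (gmul f A B) = (\<Sum>c\<in>?D. gmul f A B c * g c)"
    by (rule lf_super[OF fD supp_gmul])
  also have "\<dots> = (\<Sum>c\<in>?D. \<Sum>a\<in>supp A. \<Sum>b\<in>supp B. if f a b = c then A a * B b * g c else 0)"
    by (simp only: gmul_def sum_distrib_right ifz_mult)
  also have "\<dots> = (\<Sum>a\<in>supp A. \<Sum>b\<in>supp B. \<Sum>c\<in>?D. if f a b = c then A a * B b * g c else 0)"
    by (subst sum.swap) (subst (2) sum.swap, rule refl)
  also have "\<dots> = (\<Sum>a\<in>supp A. \<Sum>b\<in>supp B. A a * B b * g (f a b))"
  proof (intro sum.cong refl)
    fix a b assume "a \<in> supp A" "b \<in> supp B"
    then have "f a b \<in> ?D" by auto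
    then show "(\<Sum>c\<in>?D. if f a b = c then A a * B b * g c else 0) = A a * B b * g (f a b)"
      using fD by (simp add: sum.delta)
  qed
  finally show ?thesis .
qed

lemma gmul_as_lf: "gmul f X C c0 = lf (\<lambda>d. \<Sum>c\<in>supp C. if f d c = c0 then C c else 0) X"
  unfolding gmul_def lf_def by (intro sum.cong refl) (simp only: sum_distrib_left mult_ifz mult.commute)

lemma gmul_as_lf2: "gmul f A Y c0 = (\<Sum>a\<in>supp A. A a * lf (\<lambda>d. if f a d = c0 then 1 else 0) Y)"
  unfolding gmul_def lf_def by (intro sum.cong refl) (simp only: sum_distrib_left mult_ifz mult_1_right)

lemma gmul_assoc:
  assumes fA: "fs A" and fB: "fs B" and fC: "fs C"
    and ass: "\<And>a b c. a \<in> supp A \<Longrightarrow> b \<in> supp B \<Longrightarrow> c \<in> supp C \<Longrightarrow> f1 (f2 a b) c = f3 a (f4 b c)"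
  shows "gmul f1 (gmul f2 A B) C = gmul f3 A (gmul f4 B C)"
proof
  fix c0
  have "gmul f1 (gmul f2 A B) C c0 = (\<Sum>a\<in>supp A. \<Sum>b\<in>supp B. A a * B b * (\<Sum>c\<in>supp C. if f1 (f2 a b) c = c0 then C c else 0))"
    using gmul_as_lf[of f1 "gmul f2 A B" C c0] lf_gmul[OF fA fB] by simp
  also have "\<dots> = (\<Sum>a\<in>supp A. \<Sum>b\<in>supp B. \<Sum>c\<in>supp C. A a * B b * (if f3 a (f4 b c) = c0 then C c else 0))"
    by (intro sum.cong refl) (auto simp only: sum_distrib_left ass intro!: sum.cong)
  also have "\<dots> = (\<Sum>a\<in>supp A. A a * (\<Sum>b\<in>supp B. \<Sum>c\<in>supp C. B b * C c * (if f3 a (f4 b c) = c0 then 1 else 0)))"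
    by (intro sum.cong refl) (simp only: sum_distrib_left mult_ifz mult_1_right mult_0_right mult.assoc)
  also have "\<dots> = (\<Sum>a\<in>supp A. A a * lf (\<lambda>d. if f3 a d = c0 then 1 else 0) (gmul f4 B C))"
    by (intro sum.cong refl) (simp only: lf_gmul[OF fB fC])
  also have "\<dots> = gmul f3 A (gmul f4 B C) c0"
    by (rule gmul_as_lf2[symmetric])
  finally show "gmul f1 (gmul f2 A B) C c0 = gmul f3 A (gmul f4 B C) c0" .
qed

lemma gmul_delta: "gmul f (delta a) (delta b) = delta (f a b)"
  unfolding gmul_def supp_delta by (intro ext) (simp add: delta_def)


definition lsub :: "('c \<Rightarrow> rat) set \<Rightarrow> bool" where
  "lsub W \<longleftrightarrow> (\<lambda>_. 0) \<in> W \<and> (\<forall>X\<in>W. \<forall>Y\<in>W. \<forall>s. (\<lambda>c. s * X c + Y c) \<in> W)"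

lemma lsubD: "lsub W \<Longrightarrow> (\<lambda>_. 0) \<in> W" "lsub W \<Longrightarrow> X \<in> W \<Longrightarrow> Y \<in> W \<Longrightarrow> (\<lambda>c. s * X c + Y c) \<in> W"
  unfolding lsub_def by blast+

lemma lsub_diff: "lsub W \<Longrightarrow> X \<in> W \<Longrightarrow> Y \<in> W \<Longrightarrow> (\<lambda>c. X c - Y c) \<in> W"
  using lsubD(2)[of W Y X "-1"] by simp

lemma lsub_add: "lsub W \<Longrightarrow> X \<in> W \<Longrightarrow> Y \<in> W \<Longrightarrow> (\<lambda>c. X c + Y c) \<in> W"
  using lsubD(2)[of W X Y 1] by simp

lemma lsub_scale: "lsub W \<Longrightarrow> X \<in> W \<Longrightarrow> (\<lambda>c. s * X c) \<in> W"
  using lsubD(2)[of W X "\<lambda>_. 0" s] lsubD(1)[of W] by simp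

lemma lsub_sum:
  assumes W: "lsub W" and I: "finite I" and X: "\<And>i. i \<in> I \<Longrightarrow> X i \<in> W"
  shows "(\<lambda>c. \<Sum>i\<in>I. w i * X i c) \<in> W"
  using I X
proof (induction I rule: finite_induct)
  case empty then show ?case using lsubD(1)[OF W] by simp
next
  case (insert x F)
  have "(\<lambda>c. w x * X x c + (\<Sum>i\<in>F. w i * X i c)) \<in> W"
    using insert lsubD(2)[OF W, of "X x" "\<lambda>c. \<Sum>i\<in>F. w i * X i c" "w x"] by simp
  then show ?case using insert by simp
qed

lemma lsub_rspan: "lsub (rspan S)"
proof -
  have "(\<lambda>c. s * X c + Y c) \<in> rspan S" if "X \<in> rspan S" "Y \<in> rspan S" for X Y s
    using that(1)
  proof (induction X rule: rspan.induct)
    case zero then show ?case using that(2) by simp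
  next
    case (add x w a)
    have "(\<lambda>c. (s * a) * x c + (s * w c + Y c)) \<in> rspan S"
      using rspan.add[OF add.hyps(1) add.IH] .
    then show ?case by (simp add: algebra_simps)
  qed
  then show ?thesis unfolding lsub_def using rspan.zero by blast
qed

lemma rspan_base: "x \<in> S \<Longrightarrow> x \<in> rspan S"
proof -
  assume "x \<in> S"
  from rspan.add[OF this rspan.zero, of 1] show ?thesis by simp
qed

lemma rspan_sub: "S \<subseteq> W \<Longrightarrow> lsub W \<Longrightarrow> rspan S \<subseteq> W"
proof
  fix x assume a: "S \<subseteq> W" "lsub W" and x: "x \<in> rspan S"
  from x show "x \<in> W"
    by (induction x rule: rspan.induct) (use a in \<open>auto simp: lsub_def\<close>)
qed

lemma conv_bilin:
  fixes F :: "'a \<Rightarrow> ('e \<Rightarrow> rat) list \<Rightarrow> rat"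
  shows "conv (\<lambda>zs. \<Sum>a\<in>S. p a * F a zs) (\<lambda>zs. \<Sum>b\<in>T. q b * H b zs) ws
     = (\<Sum>a\<in>S. \<Sum>b\<in>T. p a * q b * conv (F a) (H b) ws)"
proof -
  have "conv (\<lambda>zs. \<Sum>a\<in>S. p a * F a zs) (\<lambda>zs. \<Sum>b\<in>T. q b * H b zs) ws
      = (\<Sum>i\<le>length ws. \<Sum>a\<in>S. \<Sum>b\<in>T. p a * q b * (F a (drop i ws) * H b (take i ws)))"
    unfolding conv_def by (simp add: sum_product mult_ac)
  also have "\<dots> = (\<Sum>a\<in>S. \<Sum>b\<in>T. \<Sum>i\<le>length ws. p a * q b * (F a (drop i ws) * H b (take i ws)))"
    by (subst sum.swap) (subst (2) sum.swap, rule refl)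
  also have "\<dots> = (\<Sum>a\<in>S. \<Sum>b\<in>T. p a * q b * conv (F a) (H b) ws)"
    unfolding conv_def by (simp add: sum_distrib_left)
  finally show ?thesis .
qed

lemma hcp_rev_Nil_ws: "hcp_rev G es [] = 1"
  by (induction es) (auto simp: hcp_rev.simps(2) edge_int_def)

lemma hcp_Nil_ws[simp]: "hcp G p [] = 1"
  by (simp add: hcp_def hcp_rev_Nil_ws)

lemma hcp_fun: "hcp G p = hcp_rev G (rev (snd p))"
  by (rule ext) (simp add: hcp_def)

lemma hcp_append: "hcp G (x, p @ q) ws = conv (hcp G (y, q)) (hcp G (z, p)) ws"
  by (simp add: hcp_fun hcp_rev_append)

context RG begin

lemma QPi_fs: "A \<in> QPi G x y \<Longrightarrow> fs A" by (simp add: QPi_def)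

lemma lsub_QPi: "lsub (QPi G x y)"
  unfolding lsub_def
proof (intro conjI ballI allI)
  show "(\<lambda>_. 0) \<in> QPi G x y" by (simp add: QPi_def)
  fix X Y s assume "X \<in> QPi G x y" "Y \<in> QPi G x y"
  then show "(\<lambda>c. s * X c + Y c) \<in> QPi G x y"
    unfolding QPi_def using supp_lin[of s X Y] fs_lin[of X Y s] by auto
qed

lemma delta_QPi: "c \<in> pi1 G x y \<Longrightarrow> delta c \<in> QPi G x y"
  by (simp add: QPi_def)

lemma ccomp_pi1: "a \<in> pi1 G y z \<Longrightarrow> b \<in> pi1 G x y \<Longrightarrow> ccomp G x z a b \<in> pi1 G x z"
  unfolding ccomp_def using rep_pi1[of a y z] rep_pi1[of b x y]
  by (intro hclass_in_pi1) (auto simp: paths_iff walk_append)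

lemma amul_QPi:
  assumes A: "A \<in> QPi G y z" and B: "B \<in> QPi G x y"
  shows "amul G x z A B \<in> QPi G x z"
proof -
  have "supp (gmul (ccomp G x z) A B) \<subseteq> pi1 G x z"
  proof
    fix c assume "c \<in> supp (gmul (ccomp G x z) A B)"
    then obtain a b where "a \<in> supp A" "b \<in> supp B" "c = ccomp G x z a b"
      using supp_gmul[of "ccomp G x z" A B] by auto
    then show "c \<in> pi1 G x z" using A B ccomp_pi1 unfolding QPi_def by blast
  qed
  then show ?thesis
    unfolding amul_gmul QPi_def using fs_gmul[of A B] A B by (auto simp: QPi_def)
qed

lemma hcp_rep_ccomp: "set ws \<subseteq> H1 G \<Longrightarrow>
  hcp G (rep (ccomp G x z a b)) ws = conv (hcp G (rep a)) (hcp G (rep b)) ws"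
proof -
  assume ws: "set ws \<subseteq> H1 G"
  let ?q = "(x, snd (rep b) @ snd (rep a))"
  have "(?q, rep (ccomp G x z a b)) \<in> homrel G x z" unfolding ccomp_def by (rule rep_hclass)
  then have "hcp G (rep (ccomp G x z a b)) ws = hcp G ?q ws" using hcp_homrel[OF _ ws] by metis
  also have "\<dots> = conv (hcp G (rep a)) (hcp G (rep b)) ws"
    by (simp add: hcp_fun hcp_rev_append)
  finally show ?thesis .
qed

lemma aint_amul:
  assumes "fs A" "fs B" "set ws \<subseteq> H1 G"
  shows "aint G (amul G x z A B) ws = conv (aint G A) (aint G B) ws"
proof -
  have "aint G (amul G x z A B) ws = (\<Sum>a\<in>supp A. \<Sum>b\<in>supp B. A a * B b * hcp G (rep (ccomp G x z a b)) ws)"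
    unfolding aint_lf amul_gmul by (rule lf_gmul[OF assms(1,2)])
  also have "\<dots> = (\<Sum>a\<in>supp A. \<Sum>b\<in>supp B. A a * B b * conv (hcp G (rep a)) (hcp G (rep b)) ws)"
    using hcp_rep_ccomp[OF assms(3)] by simp
  also have "\<dots> = conv (aint G A) (aint G B) ws"
    unfolding aint_def[abs_def] by (rule conv_bilin[symmetric])
  finally show ?thesis .
qed

lemma aint_lin: "fs X \<Longrightarrow> fs Y \<Longrightarrow> aint G (\<lambda>c. s * X c + Y c) ws = s * aint G X ws + aint G Y ws"
  unfolding aint_lf by (rule lf_lin)

lemma aint_zero[simp]: "aint G (\<lambda>_. 0) ws = 0" unfolding aint_lf by simp

lemma aint_diff: "fs X \<Longrightarrow> fs Y \<Longrightarrow> aint G (\<lambda>c. X c - Y c) ws = aint G X ws - aint G Y ws"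
  using aint_lin[of Y X "-1" ws] by simp

lemma aint_sum: "finite I \<Longrightarrow> (\<And>i. i \<in> I \<Longrightarrow> fs (X i)) \<Longrightarrow>
   aint G (\<lambda>c. \<Sum>i\<in>I. w i * X i c) ws = (\<Sum>i\<in>I. w i * aint G (X i) ws)"
proof (induction I rule: finite_induct)
  case empty then show ?case by simp
next
  case (insert x F)
  have fsF: "fs (\<lambda>c. \<Sum>i\<in>F. w i * X i c)"
    using lsub_sum[of "{A. fs A}" F X w] insert unfolding lsub_def by (auto intro: fs_lin)
  have "aint G (\<lambda>c. w x * X x c + (\<Sum>i\<in>F. w i * X i c)) ws = w x * aint G (X x) ws + aint G (\<lambda>c. \<Sum>i\<in>F. w i * X i c) ws"
    by (rule aint_lin) (use insert fsF in auto)
  then show ?case using insert by simp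
qed

lemma aint_delta: "aint G (delta c) ws = hcp G (rep c) ws"
  unfolding aint_lf by simp

lemma aint_Nil: "aint G A [] = (\<Sum>c\<in>supp A. A c)"
  unfolding aint_def by simp

lemma ccomp_one_right: "c \<in> pi1 G x y \<Longrightarrow> ccomp G x y c (hclass G x x (x, [])) = c"
proof -
  assume c: "c \<in> pi1 G x y"
  have x: "x \<in> verts G" using rep_pi1(4)[OF c] walk_V by blast
  have "ccomp G x y (hclass G x y (rep c)) (hclass G x x (x, [])) = hclass G x y (x, [] @ snd (rep c))"
    using ccomp_hclass[of "(x, [])" x x "rep c" y] rep_pi1[OF c] x by (auto simp: paths_iff)
  then show ?thesis using rep_pi1[OF c] by (metis append_Nil prod.collapse)
qed

lemma ccomp_one_left: "c \<in> pi1 G x y \<Longrightarrow> ccomp G x y (hclass G y y (y, [])) c = c"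
proof -
  assume c: "c \<in> pi1 G x y"
  have y: "y \<in> verts G" using rep_pi1(4)[OF c] walk_V by blast
  have "ccomp G x y (hclass G y y (y, [])) (hclass G x y (rep c)) = hclass G x y (x, snd (rep c) @ [])"
    using ccomp_hclass[of "rep c" x y "(y, [])" y] rep_pi1[OF c] y by (auto simp: paths_iff)
  then show ?thesis using rep_pi1[OF c] by (metis append_Nil2 prod.collapse)
qed

lemma ccomp_assoc:
  assumes a: "a \<in> pi1 G z w" and b: "b \<in> pi1 G y z" and c: "c \<in> pi1 G x y"
  shows "ccomp G x w (ccomp G y w a b) c = ccomp G x w a (ccomp G x z b c)"
proof -
  note ra = rep_pi1[OF a] and rb = rep_pi1[OF b] and rc = rep_pi1[OF c]
  let ?a = "rep a" and ?b = "rep b" and ?c = "rep c"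
  have ab: "ccomp G y w a b = hclass G y w (y, snd ?b @ snd ?a)"
    using ccomp_hclass[of ?b y z ?a w] ra rb by simp
  have bc: "ccomp G x z b c = hclass G x z (x, snd ?c @ snd ?b)"
    using ccomp_hclass[of ?c x y ?b z] rb rc by simp
  have p1: "(y, snd ?b @ snd ?a) \<in> paths G y w" using ra rb by (auto simp: paths_iff walk_append)
  have p2: "(x, snd ?c @ snd ?b) \<in> paths G x z" using rc rb by (auto simp: paths_iff walk_append)
  have "ccomp G x w (ccomp G y w a b) c = hclass G x w (x, snd ?c @ snd ?b @ snd ?a)"
    unfolding ab using ccomp_hclass[OF rc(1) p1] rc(2) by simp
  moreover have "ccomp G x w a (ccomp G x z b c) = hclass G x w (x, snd ?c @ snd ?b @ snd ?a)"
    unfolding bc using ccomp_hclass[OF p2 ra(1)] ra(2) by simp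
  ultimately show ?thesis by simp
qed

lemma amul_delta: "amul G x z (delta a) (delta b) = delta (ccomp G x z a b)"
  unfolding amul_gmul by (rule gmul_delta)

lemma amul_lin_left: "fs X \<Longrightarrow> fs Y \<Longrightarrow> fs B \<Longrightarrow> amul G x z (\<lambda>c. s * X c + Y c) B = (\<lambda>c. s * amul G x z X B c + amul G x z Y B c)"
  unfolding amul_gmul by (rule gmul_lin_left)

lemma amul_lin_right: "fs X \<Longrightarrow> fs Y \<Longrightarrow> fs A \<Longrightarrow> amul G x z A (\<lambda>c. s * X c + Y c) = (\<lambda>c. s * amul G x z A X c + amul G x z A Y c)"
  unfolding amul_gmul by (rule gmul_lin_right)

lemma amul_assoc:
  assumes "A \<in> QPi G y z" "B \<in> QPi G x y" "C \<in> QPi G x x"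
  shows "amul G x z (amul G x z A B) C = amul G x z A (amul G x y B C)"
proof -
  have "\<And>a b c. a \<in> supp A \<Longrightarrow> b \<in> supp B \<Longrightarrow> c \<in> supp C \<Longrightarrow>
     ccomp G x z (ccomp G x z a b) c = ccomp G x z a (ccomp G x y b c)"
    using assms ccomp_assoc[of _ y z _ x _ x] unfolding QPi_def by blast
  then show ?thesis unfolding amul_gmul
    by (intro gmul_assoc) (use assms in \<open>simp_all add: QPi_def\<close>)
qed

end


locale RGuv = RG G for G :: "('v, 'e, 'd) graph" +
  fixes u v :: 'v
  assumes uV: "u \<in> verts G" and vV: "v \<in> verts G"
begin

definition one where "one = hclass G u u (u, [])"
definition D where "D x = (\<lambda>c. delta x c - delta one c)"
abbreviation J where "J \<equiv> augJ G u"
definition J2 where "J2 = rspan {amul G u u B1 B2 | B1 B2. B1 \<in> J \<and> B2 \<in> J}"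
abbreviation W where "W k \<equiv> Wfilt G u v k"

lemma one_pi1: "one \<in> pi1 G u u"
  unfolding one_def by (rule hclass_in_pi1) (simp add: paths_iff uV)

lemma J_QPi: "B \<in> J \<Longrightarrow> B \<in> QPi G u u" by (simp add: augJ_def)

lemma lsub_J: "lsub J"
  unfolding lsub_def
proof (intro conjI ballI allI)
  show "(\<lambda>_. 0) \<in> J" by (simp add: augJ_def QPi_def)
  fix X Y s assume X: "X \<in> J" and Y: "Y \<in> J"
  have q: "(\<lambda>c. s * X c + Y c) \<in> QPi G u u" using lsubD(2)[OF lsub_QPi] X Y J_QPi by blast
  have "(\<Sum>c\<in>supp (\<lambda>c. s * X c + Y c). s * X c + Y c) = lf (\<lambda>_. 1) (\<lambda>c. s * X c + Y c)"
    by (simp add: lf_def)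
  also have "\<dots> = s * lf (\<lambda>_. 1) X + lf (\<lambda>_. 1) Y"
    by (rule lf_lin) (use X Y J_QPi QPi_fs in blast)+
  also have "\<dots> = 0" using X Y by (simp add: augJ_def lf_def)
  finally show "(\<lambda>c. s * X c + Y c) \<in> J" using q by (simp add: augJ_def)
qed

lemma D_J: "x \<in> pi1 G u u \<Longrightarrow> D x \<in> J"
proof -
  assume x: "x \<in> pi1 G u u"
  have q: "D x \<in> QPi G u u"
    unfolding D_def using lsub_diff[OF lsub_QPi delta_QPi[OF x] delta_QPi[OF one_pi1]] .
  have "(\<Sum>c\<in>supp (D x). D x c) = (\<Sum>c\<in>{x, one}. D x c)"
    by (rule sum.mono_neutral_left) (auto simp: supp_def D_def delta_def)
  also have "\<dots> = 0" by (cases "x = one") (auto simp: D_def delta_def)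
  finally show ?thesis using q by (simp add: augJ_def)
qed

lemma lsub_J2: "lsub J2" unfolding J2_def by (rule lsub_rspan)

lemma J2_gen: "B1 \<in> J \<Longrightarrow> B2 \<in> J \<Longrightarrow> amul G u u B1 B2 \<in> J2"
  unfolding J2_def by (rule rspan_base) blast

lemma J2_QPi: "J2 \<subseteq> QPi G u u"
  unfolding J2_def by (rule rspan_sub[OF _ lsub_QPi]) (auto intro: amul_QPi J_QPi)

lemma W_QPi: "W k \<subseteq> QPi G u v"
proof (induction k)
  case 0 then show ?case by simp
next
  case (Suc k)
  show ?case unfolding Wfilt.simps
    by (rule rspan_sub[OF _ lsub_QPi]) (use Suc in \<open>auto intro: amul_QPi J_QPi\<close>)
qed

lemma lsub_W: "lsub (W k)"
  by (cases k) (simp_all add: lsub_QPi lsub_rspan)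

lemma W_gen: "X \<in> W k \<Longrightarrow> B \<in> J \<Longrightarrow> amul G u v X B \<in> W (Suc k)"
  by simp (rule rspan_base, blast)

lemma aint_J_Nil: "B \<in> J \<Longrightarrow> aint G B [] = 0"
  by (simp add: aint_Nil augJ_def)

lemma aint_W: "A \<in> W k \<Longrightarrow> set ws \<subseteq> H1 G \<Longrightarrow> length ws < k \<Longrightarrow> aint G A ws = 0"
proof (induction k arbitrary: A ws)
  case 0 then show ?case by simp
next
  case (Suc k)
  let ?V = "{A \<in> QPi G u v. \<forall>ws. set ws \<subseteq> H1 G \<and> length ws < Suc k \<longrightarrow> aint G A ws = 0}"
  have "lsub ?V"
    unfolding lsub_def
  proof (intro conjI ballI allI)
    show "(\<lambda>_. 0) \<in> ?V" using lsubD(1)[OF lsub_QPi] by simp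
    fix X Y s assume X: "X \<in> ?V" and Y: "Y \<in> ?V"
    then show "(\<lambda>c. s * X c + Y c) \<in> ?V"
      using lsubD(2)[OF lsub_QPi] aint_lin QPi_fs by auto
  qed
  moreover have "{amul G u v X B |X B. X \<in> W k \<and> B \<in> J} \<subseteq> ?V"
  proof
    fix Z assume "Z \<in> {amul G u v X B |X B. X \<in> W k \<and> B \<in> J}"
    then obtain X B where Z: "Z = amul G u v X B" and X: "X \<in> W k" and B: "B \<in> J" by blast
    have XQ: "X \<in> QPi G u v" using X W_QPi by blast
    have BQ: "B \<in> QPi G u u" using B J_QPi by blast
    have "Z \<in> QPi G u v" using Z amul_QPi[OF XQ BQ] by simp
    moreover have "aint G Z ws = 0" if ws: "set ws \<subseteq> H1 G" "length ws < Suc k" for ws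
    proof -
      have "aint G Z ws = conv (aint G X) (aint G B) ws"
        unfolding Z by (rule aint_amul) (use XQ BQ QPi_fs ws in auto)
      also have "\<dots> = 0" unfolding conv_def
      proof (intro sum.neutral ballI)
        fix i assume "i \<in> {..length ws}"
        show "aint G X (drop i ws) * aint G B (take i ws) = 0"
        proof (cases "i = 0")
          case True then show ?thesis using aint_J_Nil[OF B] by simp
        next
          case False
          have "set (drop i ws) \<subseteq> H1 G" using ws(1) by (meson order_trans set_drop_subset)
          moreover have "length (drop i ws) < k"
          proof -
            have "length (drop i ws) = length ws - i" by simp
            then show ?thesis using False ws(2) \<open>i \<in> {..length ws}\<close> by auto
          qed
          ultimately have "aint G X (drop i ws) = 0" using Suc.IH[OF X] by blast
          then show ?thesis by simp
        qed
      qed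
      finally show ?thesis .
    qed
    ultimately show "Z \<in> ?V" by blast
  qed
  ultimately have "W (Suc k) \<subseteq> ?V" unfolding Wfilt.simps by (rule rspan_sub[rotated])
  then show ?case using Suc.prems by blast
qed

lemma D_mul:
  assumes x: "x \<in> pi1 G u u" and y: "y \<in> pi1 G u u"
  shows "amul G u u (D x) (D y) = (\<lambda>c. D (ccomp G u u x y) c - D x c - D y c)"
proof -
  have o: "one \<in> pi1 G u u" by (rule one_pi1)
  have Dx: "D x = (\<lambda>c. (-1) * delta one c + delta x c)" by (simp add: D_def)
  have Dy: "D y = (\<lambda>c. (-1) * delta one c + delta y c)" by (simp add: D_def)
  have r: "amul G u u (delta a) (D y) = (\<lambda>c. (-1) * delta (ccomp G u u a one) c + delta (ccomp G u u a y) c)" for a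
    unfolding Dy by (subst amul_lin_right) (simp_all add: amul_delta)
  have "amul G u u (D x) (D y) = (\<lambda>c. (-1) * amul G u u (delta one) (D y) c + amul G u u (delta x) (D y) c)"
  proof -
    have f: "fs (D y)" using QPi_fs[OF J_QPi[OF D_J[OF y]]] .
    show ?thesis unfolding Dx by (subst amul_lin_left) (use f in simp_all)
  qed
  also have "\<dots> = (\<lambda>c. D (ccomp G u u x y) c - D x c - D y c)"
    unfolding r using ccomp_one_right[OF o] ccomp_one_left[OF y] ccomp_one_right[OF x]
    by (intro ext) (simp add: D_def one_def[symmetric] algebra_simps)
  finally show ?thesis .
qed

end


lemma lsub_list: "lsub W \<Longrightarrow> (\<And>g. g \<in> set es \<Longrightarrow> F g \<in> W) \<Longrightarrow> (\<lambda>c. sum_list (map (\<lambda>g. F g c) es)) \<in> W"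
proof (induction es)
  case Nil then show ?case using lsubD(1) by simp
next
  case (Cons a es)
  then show ?case using lsub_add[of W "F a" "\<lambda>c. sum_list (map (\<lambda>g. F g c) es)"] by simp
qed

context RG begin

lemma lsub_H1: "lsub (H1 G)"
  unfolding lsub_def
proof (intro conjI ballI allI)
  show "(\<lambda>_. 0) \<in> H1 G" by (simp add: H1_def)
  fix X Y s assume X: "X \<in> H1 G" and Y: "Y \<in> H1 G"
  have "(\<Sum>e\<in>{e\<in>edges G. src G e = w}. s * X e + Y e) = 0" if "w \<in> verts G" for w
    using H1_vert[OF X that] H1_vert[OF Y that] by (simp add: sum.distrib sum_distrib_left[symmetric])
  then show "(\<lambda>c. s * X c + Y c) \<in> H1 G"
    using X Y unfolding H1_def by auto
qed

lemma walk_appendI: "walk G x p y \<Longrightarrow> walk G y q z \<Longrightarrow> walk G x (p @ q) z"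
  using walk_append by blast

lemma walk_single: "e \<in> edges G \<Longrightarrow> walk G (src G e) [e] (tgt G e)"
  using src_V tgt_V by auto

definition chain :: "'e list \<Rightarrow> 'e \<Rightarrow> rat" where
  "chain es = (\<lambda>f. sum_list (map (\<lambda>g. (if f = g then 1 else 0) - (if f = einv G g then 1 else 0)) es))"

lemma chain_sum:
  fixes X :: "'e \<Rightarrow> rat"
  shows "set es \<subseteq> edges G \<Longrightarrow> (\<Sum>f\<in>edges G. chain es f * X f) = sum_list (map (\<lambda>g. X g - X (einv G g)) es)"
proof (induction es)
  case Nil then show ?case by (simp add: chain_def)
next
  case (Cons g es)
  have g: "g \<in> edges G" "einv G g \<in> edges G" using Cons.prems einv_edge by auto
  have pt: "chain (g # es) f * X f = (if f = g then X f else 0) - (if f = einv G g then X f else 0) + chain es f * X f" for f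
    by (simp add: chain_def distrib_right left_diff_distrib)
  have "(\<Sum>f\<in>edges G. chain (g # es) f * X f)
      = (\<Sum>f\<in>edges G. (if f = g then X f else 0)) - (\<Sum>f\<in>edges G. (if f = einv G g then X f else 0)) + (\<Sum>f\<in>edges G. chain es f * X f)"
    by (simp only: pt sum.distrib sum_subtractf)
  also have "\<dots> = X g - X (einv G g) + (\<Sum>f\<in>edges G. chain es f * X f)"
    using g fin_E by (simp add: sum.delta')
  finally show ?case using Cons by simp
qed

lemma walk_srctgt:
  "walk G x es y \<Longrightarrow> sum_list (map (\<lambda>g. (if src G g = w then 1 else 0) - (if tgt G g = w then (1::rat) else 0)) es)
     = (if x = w then 1 else 0) - (if y = w then 1 else 0)"
  by (induction es arbitrary: x) auto

lemma chain_H1: "walk G x es x \<Longrightarrow> chain es \<in> H1 G"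
proof -
  assume w: "walk G x es x"
  have E: "set es \<subseteq> edges G" using walk_E[OF w] .
  have z: "chain es f = 0" if "f \<notin> edges G" for f
  proof -
    have "\<forall>g\<in>set es. f \<noteq> g \<and> f \<noteq> einv G g" using E that einv_edge by blast
    then show ?thesis unfolding chain_def by (induction es) auto
  qed
  have a: "chain es (einv G f) = - chain es f" if f: "f \<in> edges G" for f
  proof -
    have "\<forall>g\<in>set es. (einv G f = g \<longleftrightarrow> f = einv G g) \<and> (einv G f = einv G g \<longleftrightarrow> f = g)"
      using E f by (metis einv_einv subsetD)
    then show ?thesis unfolding chain_def by (induction es) auto
  qed
  have v: "(\<Sum>f\<in>{f\<in>edges G. src G f = w'}. chain es f) = 0" for w'
  proof -
    have "(\<Sum>f\<in>{f\<in>edges G. src G f = w'}. chain es f) = (\<Sum>f\<in>edges G. if src G f = w' then chain es f else 0)"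
      using fin_E by (rule sum.inter_filter)
    also have "\<dots> = (\<Sum>f\<in>edges G. chain es f * (if src G f = w' then 1 else 0))"
      by (intro sum.cong refl) simp
    also have "\<dots> = sum_list (map (\<lambda>g. (if src G g = w' then 1 else 0) - (if tgt G g = w' then (1::rat) else 0)) es)"
      using chain_sum[OF E, of "\<lambda>f. if src G f = w' then 1 else 0"] E by (simp add: tgt_def)
    also have "\<dots> = 0" using walk_srctgt[OF w] by simp
    finally show ?thesis .
  qed
  show ?thesis unfolding H1_def using z a v by blast
qed

definition ip :: "('e \<Rightarrow> rat) \<Rightarrow> ('e \<Rightarrow> rat) \<Rightarrow> rat" where
  "ip \<zeta> \<omega> = (\<Sum>f\<in>edges G. len G f * \<zeta> f * \<omega> f)"

lemma ip_sym: "ip \<zeta> \<omega> = ip \<omega> \<zeta>" by (simp add: ip_def mult_ac)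

lemma ip_lin: "ip (\<lambda>f. a * x f + y f) \<omega> = a * ip x \<omega> + ip y \<omega>"
  by (simp add: ip_def sum.distrib sum_distrib_left algebra_simps)

lemma ip_pos: "\<zeta> \<in> H1 G \<Longrightarrow> ip \<zeta> \<zeta> = 0 \<Longrightarrow> \<zeta> = (\<lambda>_. 0)"
proof -
  assume z: "\<zeta> \<in> H1 G" "ip \<zeta> \<zeta> = 0"
  have nn: "\<forall>f\<in>edges G. 0 \<le> len G f * \<zeta> f * \<zeta> f"
  proof
    fix f assume "f \<in> edges G"
    then have "0 \<le> len G f" using len_pos less_imp_le by blast
    then show "0 \<le> len G f * \<zeta> f * \<zeta> f" by (simp add: mult.assoc)
  qed
  have "\<forall>f\<in>edges G. len G f * \<zeta> f * \<zeta> f = 0"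
    using sum_nonneg_eq_0_iff[OF fin_E, of "\<lambda>f. len G f * \<zeta> f * \<zeta> f"] nn z(2) unfolding ip_def by blast
  then have "\<forall>f\<in>edges G. \<zeta> f = 0" using len_pos by force
  then show ?thesis using H1_zero[OF z(1)] by (intro ext) metis
qed

lemma cyc_src: "\<zeta> \<in> H1 G \<Longrightarrow> (\<Sum>f\<in>edges G. \<zeta> f * Q (src G f)) = (0::rat)"
proof -
  assume z: "\<zeta> \<in> H1 G"
  have "(\<Sum>f\<in>edges G. \<zeta> f * Q (src G f)) = (\<Sum>w\<in>verts G. \<Sum>f\<in>{f\<in>edges G. src G f = w}. \<zeta> f * Q (src G f))"
    by (rule sum.group[symmetric]) (use fin_E fin_V src_V in auto)
  also have "\<dots> = (\<Sum>w\<in>verts G. Q w * (\<Sum>f\<in>{f\<in>edges G. src G f = w}. \<zeta> f))"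
    by (intro sum.cong refl) (simp add: sum_distrib_left mult.commute)
  also have "\<dots> = 0" using H1_vert[OF z] by simp
  finally show ?thesis .
qed

lemma cyc_tgt: "\<zeta> \<in> H1 G \<Longrightarrow> (\<Sum>f\<in>edges G. \<zeta> f * Q (tgt G f)) = (0::rat)"
proof -
  assume z: "\<zeta> \<in> H1 G"
  have "(\<Sum>f\<in>edges G. \<zeta> f * Q (tgt G f)) = (\<Sum>f\<in>edges G. \<zeta> (einv G f) * Q (tgt G (einv G f)))"
    by (rule sum.reindex_bij_witness[where i="einv G" and j="einv G"]) (auto simp: einv_edge)
  also have "\<dots> = - (\<Sum>f\<in>edges G. \<zeta> f * Q (src G f))"
    using H1_anti[OF z] by (simp add: sum_negf[symmetric])
  also have "\<dots> = 0" using cyc_src[OF z] by simp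
  finally show ?thesis .
qed

definition psum :: "('e \<Rightarrow> rat) \<Rightarrow> 'e list \<Rightarrow> rat" where
  "psum \<omega> es = sum_list (map (\<lambda>g. len G g * \<omega> g) es)"

lemma hcp_rev_single_ws: "hcp_rev G es [\<omega>] = psum \<omega> es"
proof (induction es)
  case Nil then show ?case by (simp add: psum_def)
next
  case (Cons e es)
  have "hcp_rev G (e # es) [\<omega>] = edge_int G e [\<omega>] * hcp_rev G es [] + edge_int G e [] * hcp_rev G es [\<omega>]"
    by (simp add: hcp_rev.simps(2))
  then show ?case using Cons by (simp add: hcp_rev_Nil_ws edge_int_def psum_def)
qed

lemma hcp_single_ws: "hcp G p [\<omega>] = psum \<omega> (snd p)"
  by (simp add: hcp_def hcp_rev_single_ws psum_def sum_list_rev rev_map[symmetric])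

lemma psum_append[simp]: "psum \<omega> (a @ b) = psum \<omega> a + psum \<omega> b" by (simp add: psum_def)

lemma psum_rp: "set t \<subseteq> edges G \<Longrightarrow> \<omega> \<in> H1 G \<Longrightarrow> psum \<omega> (rp G t) = - psum \<omega> t"
  by (induction t) (auto simp: psum_def H1_anti)

end

context RGuv begin

definition tau :: "'v \<Rightarrow> 'e list" where
  "tau x = (if x = u then [] else SOME es. walk G u es x)"

lemma walk_tau: "x \<in> verts G \<Longrightarrow> walk G u (tau x) x"
proof (cases "x = u")
  case True then show ?thesis using uV by (simp add: tau_def)
next
  case False
  assume x: "x \<in> verts G"
  obtain es where es: "walk G u es x" using conn[OF uV x] by blast
  have "walk G u (SOME es. walk G u es x) x" by (rule someI[of _ es]) (rule es)
  then show ?thesis unfolding tau_def using False by simp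
qed

lemma tau_E: "x \<in> verts G \<Longrightarrow> set (tau x) \<subseteq> edges G"
  using walk_E[OF walk_tau] .

definition hh :: "'e \<Rightarrow> 'e list" where
  "hh e = tau (src G e) @ [e] @ rp G (tau (tgt G e))"

lemma walk_hh: "e \<in> edges G \<Longrightarrow> walk G u (hh e) u"
  unfolding hh_def
  by (intro walk_appendI[OF walk_tau[OF src_V]] walk_appendI[OF walk_single] walk_rp[OF walk_tau[OF tgt_V]])

lemma walk_concat_hh: "set es \<subseteq> edges G \<Longrightarrow> walk G u (concat (map hh es)) u"
proof (induction es)
  case Nil then show ?case using uV by simp
next
  case (Cons e es)
  then show ?case using walk_appendI[OF walk_hh] by simp
qed

lemma loop_decomp: "walk G y es x \<Longrightarrow> ((u, tau y @ es), (u, concat (map hh es) @ tau x)) \<in> homrel G u x"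
proof (induction es arbitrary: y)
  case Nil then show ?case by (simp add: homrel_refl)
next
  case (Cons e es)
  then have e: "e \<in> edges G" "src G e = y" "y \<in> verts G" "walk G (tgt G e) es x" by auto
  let ?t = "tgt G e"
  have tV: "?t \<in> verts G" using tgt_V[OF e(1)] .
  have wt: "walk G u (tau ?t) ?t" using walk_tau[OF tV] .
  have wy: "walk G u (tau y) y" using walk_tau[OF e(3)] .
  have ws: "walk G y [e] ?t" using walk_single[OF e(1)] e(2) by simp
  have wr: "walk G u (tau y @ [e] @ rp G (tau ?t)) u"
    by (rule walk_appendI[OF wy walk_appendI[OF ws walk_rp[OF wt]]])
  have w1: "walk G u ((tau y @ [e]) @ rp G (tau ?t) @ tau ?t @ es) x"
    by (rule walk_appendI[OF walk_appendI[OF wy ws] walk_appendI[OF walk_rp[OF wt] walk_appendI[OF wt e(4)]]])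
  have 1: "((u, (tau y @ [e]) @ rp G (tau ?t) @ tau ?t @ es), (u, (tau y @ [e]) @ es)) \<in> homrel G u x"
    by (rule cancel_rp'[OF w1 tau_E[OF tV]])
  have p: "(u, tau ?t @ es) \<in> paths G u x" using walk_appendI[OF wt e(4)] by (simp add: paths_iff)
  have 2: "((u, (tau y @ [e] @ rp G (tau ?t)) @ tau ?t @ es), (u, (tau y @ [e] @ rp G (tau ?t)) @ concat (map hh es) @ tau x)) \<in> homrel G u x"
    using cong_pre[OF Cons.IH[OF e(4)] p wr] by simp
  have "((u, tau y @ e # es), (u, (tau y @ [e] @ rp G (tau ?t)) @ concat (map hh es) @ tau x)) \<in> homrel G u x"
    using homrel_trans[OF homrel_sym[OF 1]] 2 by simp
  moreover have "hh e = tau y @ [e] @ rp G (tau ?t)" using e(2) by (simp add: hh_def)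
  ultimately show ?case by simp
qed

lemma loop_class: "c \<in> pi1 G u u \<Longrightarrow> c = hclass G u u (u, concat (map hh (snd (rep c))))"
proof -
  assume c: "c \<in> pi1 G u u"
  note r = rep_pi1[OF c]
  have "((u, tau u @ snd (rep c)), (u, concat (map hh (snd (rep c))) @ tau u)) \<in> homrel G u u"
    by (rule loop_decomp[OF r(4)])
  moreover have "(u, snd (rep c)) = rep c" using r(3) by (metis prod.collapse)
  moreover have "tau u = []" by (simp add: tau_def)
  ultimately have "(rep c, (u, concat (map hh (snd (rep c))))) \<in> homrel G u u"
    by simp
  then show ?thesis using r(2) hclass_eq_iff by metis
qed

definition Hc :: "'e \<Rightarrow> ('v \<times> 'e list) set" where
  "Hc e = hclass G u u (u, hh e)"

lemma Hc_pi1: "e \<in> edges G \<Longrightarrow> Hc e \<in> pi1 G u u"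
  unfolding Hc_def by (rule hclass_in_pi1) (simp add: paths_iff walk_hh)

lemma class_concat_pi1: "set es \<subseteq> edges G \<Longrightarrow> hclass G u u (u, concat (map hh es)) \<in> pi1 G u u"
  by (rule hclass_in_pi1) (simp add: paths_iff walk_concat_hh)

lemma class_concat_cons: "e \<in> edges G \<Longrightarrow> set es \<subseteq> edges G \<Longrightarrow>
   hclass G u u (u, concat (map hh (e # es))) = ccomp G u u (hclass G u u (u, concat (map hh es))) (Hc e)"
  unfolding Hc_def using ccomp_hclass[of "(u, hh e)" u u "(u, concat (map hh es))" u]
  by (simp add: paths_iff walk_hh walk_concat_hh)

lemma D_one: "D one = (\<lambda>_. 0)" by (simp add: D_def)

lemma D_concat: "set es \<subseteq> edges G \<Longrightarrow>
   (\<lambda>c. D (hclass G u u (u, concat (map hh es))) c - sum_list (map (\<lambda>g. D (Hc g) c) es)) \<in> J2"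
proof (induction es)
  case Nil then show ?case using lsubD(1)[OF lsub_J2] by (simp add: one_def[symmetric] D_one)
next
  case (Cons e es)
  let ?R = "hclass G u u (u, concat (map hh es))"
  have e: "e \<in> edges G" "set es \<subseteq> edges G" using Cons.prems by auto
  have R: "?R \<in> pi1 G u u" using class_concat_pi1[OF e(2)] .
  have H: "Hc e \<in> pi1 G u u" using Hc_pi1[OF e(1)] .
  have m: "amul G u u (D ?R) (D (Hc e)) \<in> J2" by (rule J2_gen[OF D_J[OF R] D_J[OF H]])
  have eq: "(\<lambda>c. D (hclass G u u (u, concat (map hh (e # es)))) c - sum_list (map (\<lambda>g. D (Hc g) c) (e # es)))
     = (\<lambda>c. (D ?R c - sum_list (map (\<lambda>g. D (Hc g) c) es)) + amul G u u (D ?R) (D (Hc e)) c)"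
    unfolding class_concat_cons[OF e] D_mul[OF R H] by (intro ext) simp
  show ?case unfolding eq by (rule lsub_add[OF lsub_J2 Cons.IH[OF e(2)] m])
qed

lemma D_inv: "e \<in> edges G \<Longrightarrow> (\<lambda>c. D (Hc (einv G e)) c + D (Hc e) c) \<in> J2"
proof -
  assume e: "e \<in> edges G"
  have e': "einv G e \<in> edges G" using einv_edge[OF e] .
  let ?s = "src G e" and ?t = "tgt G e"
  have sV: "?s \<in> verts G" and tV: "?t \<in> verts G" using src_V[OF e] tgt_V[OF e] .
  have hinv: "hh (einv G e) = tau ?t @ [einv G e] @ rp G (tau ?s)"
    using e by (simp add: hh_def tgt_def)
  have c1: "ccomp G u u (Hc (einv G e)) (Hc e) = hclass G u u (u, hh e @ hh (einv G e))"
    unfolding Hc_def using ccomp_hclass[of "(u, hh e)" u u "(u, hh (einv G e))" u]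
    by (simp add: paths_iff walk_hh e e')
  have ws: "walk G u (tau ?s) ?s" "walk G u (tau ?t) ?t" using walk_tau sV tV by auto
  have w0: "walk G u (hh e @ hh (einv G e)) u" by (rule walk_appendI[OF walk_hh[OF e] walk_hh[OF e']])
  have eq0: "hh e @ hh (einv G e) = (tau ?s @ [e]) @ rp G (tau ?t) @ tau ?t @ ([einv G e] @ rp G (tau ?s))"
    unfolding hinv by (simp add: hh_def)
  have w1: "walk G u ((tau ?s @ [e]) @ rp G (tau ?t) @ tau ?t @ ([einv G e] @ rp G (tau ?s))) u"
    using w0 eq0 by simp
  have 1: "((u, hh e @ hh (einv G e)), (u, tau ?s @ [e] @ rp G [e] @ rp G (tau ?s))) \<in> homrel G u u"
    using cancel_rp'[OF w1 tau_E[OF tV]] eq0 by simp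
  have w2: "walk G u (tau ?s @ [e] @ rp G [e] @ rp G (tau ?s)) u"
    using homrel_paths[OF 1] w0 by (simp add: paths_iff)
  have 2: "((u, tau ?s @ [e] @ rp G [e] @ rp G (tau ?s)), (u, tau ?s @ rp G (tau ?s))) \<in> homrel G u u"
    by (rule cancel_rp[OF w2]) (simp add: e)
  have w3: "walk G u ([] @ tau ?s @ rp G (tau ?s) @ []) u"
    using homrel_paths[OF 2] w2 by (auto simp: paths_iff)
  have 3: "((u, tau ?s @ rp G (tau ?s)), (u, [])) \<in> homrel G u u"
    using cancel_rp[OF w3 tau_E[OF sV]] by simp
  have "((u, hh e @ hh (einv G e)), (u, [])) \<in> homrel G u u"
    using homrel_trans[OF homrel_trans[OF 1 2] 3] by simp
  then have c2: "ccomp G u u (Hc (einv G e)) (Hc e) = one"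
    unfolding c1 one_def hclass_eq_iff .
  have m: "amul G u u (D (Hc (einv G e))) (D (Hc e)) \<in> J2"
    by (rule J2_gen[OF D_J[OF Hc_pi1[OF e']] D_J[OF Hc_pi1[OF e]]])
  have "(\<lambda>c. (-1) * amul G u u (D (Hc (einv G e))) (D (Hc e)) c) \<in> J2"
    by (rule lsub_scale[OF lsub_J2 m])
  then show ?thesis unfolding D_mul[OF Hc_pi1[OF e'] Hc_pi1[OF e]] c2 D_one by (simp add: add.commute)
qed

definition LL :: "('e \<Rightarrow> rat) \<Rightarrow> ('v \<times> 'e list) set \<Rightarrow> rat" where
  "LL \<zeta> = (\<lambda>c. \<Sum>f\<in>edges G. \<zeta> f * D (Hc f) c)"

lemma LL_J: "LL \<zeta> \<in> J"
  unfolding LL_def by (rule lsub_sum[OF lsub_J fin_E]) (rule D_J[OF Hc_pi1])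

lemma LL_QPi: "LL \<zeta> \<in> QPi G u u" using J_QPi[OF LL_J] .

lemma LL_lin: "LL (\<lambda>f. a * x f + y f) = (\<lambda>c. a * LL x c + LL y c)"
  by (intro ext) (simp add: LL_def sum.distrib sum_distrib_left algebra_simps)

lemma LL_sum: "finite I \<Longrightarrow> LL (\<lambda>f. \<Sum>i\<in>I. w i * z i f) = (\<lambda>c. \<Sum>i\<in>I. w i * LL (z i) c)"
  by (intro ext) (simp add: LL_def sum_distrib_left sum_distrib_right mult_ac sum.swap[of _ I])

lemma LL_zero: "LL (\<lambda>_. 0) = (\<lambda>_. 0)" by (simp add: LL_def)

lemma LL_chain: "set es \<subseteq> edges G \<Longrightarrow> LL (chain es) c = sum_list (map (\<lambda>g. D (Hc g) c - D (Hc (einv G g)) c) es)"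
  unfolding LL_def by (rule chain_sum)

lemma LL_chain_J2: "set es \<subseteq> edges G \<Longrightarrow>
   (\<lambda>c. LL (chain es) c - 2 * sum_list (map (\<lambda>g. D (Hc g) c) es)) \<in> J2"
proof (induction es)
  case Nil then show ?case using lsubD(1)[OF lsub_J2] by (simp add: LL_chain)
next
  case (Cons e es)
  have e: "e \<in> edges G" "set es \<subseteq> edges G" using Cons.prems by auto
  have eq: "(\<lambda>c. LL (chain (e # es)) c - 2 * sum_list (map (\<lambda>g. D (Hc g) c) (e # es)))
    = (\<lambda>c. (-1) * (D (Hc (einv G e)) c + D (Hc e) c) + (LL (chain es) c - 2 * sum_list (map (\<lambda>g. D (Hc g) c) es)))"
  proof (intro ext)
    fix c
    have h1: "LL (chain (e # es)) c = (D (Hc e) c - D (Hc (einv G e)) c) + LL (chain es) c"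
      using LL_chain[OF Cons.prems, of c] LL_chain[OF e(2), of c] by simp
    have h2: "sum_list (map (\<lambda>g. D (Hc g) c) (e # es)) = D (Hc e) c + sum_list (map (\<lambda>g. D (Hc g) c) es)"
      by simp
    show "LL (chain (e # es)) c - 2 * sum_list (map (\<lambda>g. D (Hc g) c) (e # es))
       = (-1) * (D (Hc (einv G e)) c + D (Hc e) c) + (LL (chain es) c - 2 * sum_list (map (\<lambda>g. D (Hc g) c) es))"
      unfolding h1 h2 by (simp add: algebra_simps)
  qed
  show ?case unfolding eq by (rule lsubD(2)[OF lsub_J2 D_inv[OF e(1)] Cons.IH[OF e(2)]])
qed

definition half :: "('e \<Rightarrow> rat) \<Rightarrow> 'e \<Rightarrow> rat" where "half z = (\<lambda>f. (1/2) * z f)"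

lemma LL_scale: "LL (\<lambda>f. a * z f) = (\<lambda>c. a * LL z c)"
  by (intro ext) (simp add: LL_def sum_distrib_left mult.assoc)

lemma D_L: "c \<in> pi1 G u u \<Longrightarrow> (\<lambda>x. D c x - LL (half (chain (snd (rep c)))) x) \<in> J2"
proof -
  assume c: "c \<in> pi1 G u u"
  let ?es = "snd (rep c)"
  let ?S = "\<lambda>x. sum_list (map (\<lambda>g. D (Hc g) x) ?es)"
  let ?C = "hclass G u u (u, concat (map hh ?es))"
  have E: "set ?es \<subseteq> edges G" using walk_E[OF rep_pi1(4)[OF c]] .
  have eq: "(\<lambda>x. D c x - LL (half (chain ?es)) x) = (\<lambda>x. 1 * (D ?C x - ?S x)
       + (-1/2) * (LL (chain ?es) x - 2 * ?S x))"
  proof (intro ext)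
    fix x
    have h: "LL (half (chain ?es)) x = (1/2) * LL (chain ?es) x"
      unfolding half_def LL_scale by simp
    have d: "D c x = D ?C x" using loop_class[OF c] by simp
    show "D c x - LL (half (chain ?es)) x = 1 * (D ?C x - ?S x) + (-1/2) * (LL (chain ?es) x - 2 * ?S x)"
      unfolding h d by (simp add: right_diff_distrib)
  qed
  show ?thesis unfolding eq
    by (rule lsubD(2)[OF lsub_J2 D_concat[OF E] lsub_scale[OF lsub_J2 LL_chain_J2[OF E]]])
qed

lemma sum_delta_fs: "finite (supp B) \<Longrightarrow> (\<Sum>c\<in>supp B. B c * delta c x) = B x"
proof -
  assume f: "finite (supp B)"
  have "(\<Sum>c\<in>supp B. B c * delta c x) = (\<Sum>c\<in>supp B. if c = x then B c else 0)"
    by (intro sum.cong refl) (auto simp: delta_def)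
  also have "\<dots> = (if x \<in> supp B then B x else 0)" using f by (rule sum.delta)
  also have "\<dots> = B x" by (auto simp: supp_def)
  finally show ?thesis .
qed

lemma J_decomp: "B \<in> J \<Longrightarrow> B = (\<lambda>x. \<Sum>c\<in>supp B. B c * D c x)"
proof (intro ext)
  fix x assume B: "B \<in> J"
  have s: "(\<Sum>c\<in>supp B. B c) = 0" using B by (simp add: augJ_def)
  have f: "finite (supp B)" using B J_QPi QPi_fs by blast
  have "(\<Sum>c\<in>supp B. B c * D c x) = (\<Sum>c\<in>supp B. B c * delta c x) - (\<Sum>c\<in>supp B. B c) * delta one x"
    by (simp add: D_def right_diff_distrib sum_subtractf sum_distrib_right)
  also have "\<dots> = B x" using s sum_delta_fs[OF f] by simp
  finally show "B x = (\<Sum>c\<in>supp B. B c * D c x)" by simp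
qed

definition zetaB :: "(('v \<times> 'e list) set \<Rightarrow> rat) \<Rightarrow> 'e \<Rightarrow> rat" where
  "zetaB B = (\<lambda>f. \<Sum>c\<in>supp B. B c * half (chain (snd (rep c))) f)"

lemma zetaB_H1: "B \<in> J \<Longrightarrow> zetaB B \<in> H1 G"
proof -
  assume B: "B \<in> J"
  have f: "finite (supp B)" using B J_QPi QPi_fs by blast
  have "half (chain (snd (rep c))) \<in> H1 G" if "c \<in> supp B" for c
  proof -
    have c: "c \<in> pi1 G u u" using that B by (auto simp: augJ_def QPi_def)
    have "chain (snd (rep c)) \<in> H1 G" using chain_H1[OF rep_pi1(4)[OF c]] .
    from lsub_scale[OF lsub_H1 this, of "1/2"] show ?thesis by (simp add: half_def)
  qed
  then show ?thesis unfolding zetaB_def by (rule lsub_sum[OF lsub_H1 f])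
qed

lemma J_L: "B \<in> J \<Longrightarrow> (\<lambda>x. B x - LL (zetaB B) x) \<in> J2"
proof -
  assume B: "B \<in> J"
  have f: "finite (supp B)" using B J_QPi QPi_fs by blast
  have eq: "(\<lambda>x. B x - LL (zetaB B) x) = (\<lambda>x. \<Sum>c\<in>supp B. B c * (D c x - LL (half (chain (snd (rep c)))) x))"
  proof (intro ext)
    fix x
    have 1: "B x = (\<Sum>c\<in>supp B. B c * D c x)" by (subst J_decomp[OF B]) (rule refl)
    have 2: "LL (zetaB B) x = (\<Sum>c\<in>supp B. B c * LL (half (chain (snd (rep c)))) x)"
      unfolding zetaB_def LL_sum[OF f] by (rule refl)
    show "B x - LL (zetaB B) x = (\<Sum>c\<in>supp B. B c * (D c x - LL (half (chain (snd (rep c)))) x))"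
      unfolding 2 by (subst 1) (simp add: right_diff_distrib sum_subtractf)
  qed
  show ?thesis unfolding eq
    by (rule lsub_sum[OF lsub_J2 f], rule D_L) (use B in \<open>auto simp: augJ_def QPi_def\<close>)
qed

lemma aint_D: "x \<in> pi1 G u u \<Longrightarrow> aint G (D x) ws = hcp G (rep x) ws - hcp G (rep one) ws"
  unfolding D_def by (simp add: aint_diff aint_delta)

lemma hcp_rep_class: "set ws \<subseteq> H1 G \<Longrightarrow> hcp G (rep (hclass G x y p)) ws = hcp G p ws"
  using hcp_homrel[OF rep_hclass] by metis

lemma aint_D_Hc: "\<omega> \<in> H1 G \<Longrightarrow> f \<in> edges G \<Longrightarrow>
  aint G (D (Hc f)) [\<omega>] = psum \<omega> (tau (src G f)) + len G f * \<omega> f - psum \<omega> (tau (tgt G f))"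
proof -
  assume w: "\<omega> \<in> H1 G" and f: "f \<in> edges G"
  have "aint G (D (Hc f)) [\<omega>] = hcp G (rep (Hc f)) [\<omega>] - hcp G (rep one) [\<omega>]"
    by (rule aint_D[OF Hc_pi1[OF f]])
  also have "\<dots> = hcp G (u, hh f) [\<omega>] - hcp G (u, []) [\<omega>]"
    unfolding Hc_def one_def using w by (simp add: hcp_rep_class)
  also have "\<dots> = psum \<omega> (hh f)" by (simp add: hcp_single_ws psum_def)
  also have "\<dots> = psum \<omega> (tau (src G f)) + len G f * \<omega> f - psum \<omega> (tau (tgt G f))"
    unfolding hh_def using psum_rp[OF tau_E[OF tgt_V[OF f]] w] by (simp add: psum_def)
  finally show ?thesis .
qed

lemma aint_LL: "\<zeta> \<in> H1 G \<Longrightarrow> \<omega> \<in> H1 G \<Longrightarrow> aint G (LL \<zeta>) [\<omega>] = ip \<zeta> \<omega>"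
proof -
  assume z: "\<zeta> \<in> H1 G" and w: "\<omega> \<in> H1 G"
  let ?P = "\<lambda>x. psum \<omega> (tau x)"
  have "aint G (LL \<zeta>) [\<omega>] = (\<Sum>f\<in>edges G. \<zeta> f * aint G (D (Hc f)) [\<omega>])"
    unfolding LL_def by (rule aint_sum[OF fin_E]) (use QPi_fs J_QPi D_J Hc_pi1 in blast)
  also have "\<dots> = (\<Sum>f\<in>edges G. \<zeta> f * ?P (src G f) + len G f * \<zeta> f * \<omega> f - \<zeta> f * ?P (tgt G f))"
    by (intro sum.cong refl) (simp add: aint_D_Hc[OF w] algebra_simps)
  also have "\<dots> = (\<Sum>f\<in>edges G. \<zeta> f * ?P (src G f)) + ip \<zeta> \<omega> - (\<Sum>f\<in>edges G. \<zeta> f * ?P (tgt G f))"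
    unfolding ip_def by (simp only: sum.distrib sum_subtractf)
  also have "\<dots> = ip \<zeta> \<omega>" using cyc_src[OF z, of ?P] cyc_tgt[OF z, of ?P] by simp
  finally show ?thesis .
qed

end


context RG begin

definition orth :: "('e \<Rightarrow> rat) list \<Rightarrow> bool" where
  "orth bs \<longleftrightarrow> (\<forall>i<length bs. \<forall>j<length bs. i \<noteq> j \<longrightarrow> ip (bs!i) (bs!j) = 0)"

definition inspan :: "('e \<Rightarrow> rat) list \<Rightarrow> ('e \<Rightarrow> rat) \<Rightarrow> bool" where
  "inspan bs x \<longleftrightarrow> (\<exists>\<alpha>. x = (\<lambda>e. \<Sum>j<length bs. \<alpha> j * (bs!j) e))"

definition gs_step :: "('e \<Rightarrow> rat) list \<Rightarrow> ('e \<Rightarrow> rat) \<Rightarrow> 'e \<Rightarrow> rat" where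
  "gs_step bs c = (\<lambda>e. c e - (\<Sum>j<length bs. (ip c (bs!j) / ip (bs!j) (bs!j)) * (bs!j) e))"

fun gs :: "('e \<Rightarrow> rat) list \<Rightarrow> ('e \<Rightarrow> rat) list \<Rightarrow> ('e \<Rightarrow> rat) list" where
  "gs acc [] = acc"
| "gs acc (c # cs) = gs (acc @ [gs_step acc c]) cs"

lemma ip_sum_left: "ip (\<lambda>e. \<Sum>j\<in>I. a j * b j e) y = (\<Sum>j\<in>I. a j * ip (b j) y)"
  unfolding ip_def by (simp add: sum_distrib_left sum_distrib_right mult_ac sum.swap[of _ I])

lemma ip_diff_left: "ip (\<lambda>e. x e - z e) y = ip x y - ip z y"
  unfolding ip_def by (simp add: left_diff_distrib right_diff_distrib sum_subtractf)

lemma ip_zero_left[simp]: "ip (\<lambda>_. 0) y = 0" by (simp add: ip_def)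

lemma ip_self_zero: "b \<in> H1 G \<Longrightarrow> ip b b = 0 \<Longrightarrow> ip x b = 0"
  using ip_pos[of b] by (simp add: ip_def)

lemma orth_sum: "orth bs \<Longrightarrow> k < length bs \<Longrightarrow>
   (\<Sum>j<length bs. a j * ip (bs!j) (bs!k)) = a k * ip (bs!k) (bs!k)"
proof -
  assume o: "orth bs" and k: "k < length bs"
  have "(\<Sum>j<length bs. a j * ip (bs!j) (bs!k)) = (\<Sum>j<length bs. if j = k then a k * ip (bs!k) (bs!k) else 0)"
    by (intro sum.cong refl) (use o k in \<open>auto simp: orth_def\<close>)
  also have "\<dots> = a k * ip (bs!k) (bs!k)" using k by simp
  finally show ?thesis .
qed

lemma gs_step_H1: "set bs \<subseteq> H1 G \<Longrightarrow> c \<in> H1 G \<Longrightarrow> gs_step bs c \<in> H1 G"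
proof -
  assume b: "set bs \<subseteq> H1 G" and c: "c \<in> H1 G"
  have "(\<lambda>e. \<Sum>j<length bs. (ip c (bs!j) / ip (bs!j) (bs!j)) * (bs!j) e) \<in> H1 G"
    by (rule lsub_sum[OF lsub_H1]) (use b in auto)
  from lsub_diff[OF lsub_H1 c this] show ?thesis unfolding gs_step_def .
qed

lemma gs_step_orth:
  assumes b: "set bs \<subseteq> H1 G" and o: "orth bs" and k: "k < length bs"
  shows "ip (gs_step bs c) (bs!k) = 0"
proof -
  have "ip (gs_step bs c) (bs!k) = ip c (bs!k) - (\<Sum>j<length bs. (ip c (bs!j) / ip (bs!j) (bs!j)) * ip (bs!j) (bs!k))"
    unfolding gs_step_def ip_diff_left ip_sum_left by (rule refl)
  also have "\<dots> = ip c (bs!k) - (ip c (bs!k) / ip (bs!k) (bs!k)) * ip (bs!k) (bs!k)"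
    unfolding orth_sum[OF o k, of "\<lambda>j. ip c (bs!j) / ip (bs!j) (bs!j)"] by (rule refl)
  also have "\<dots> = 0"
  proof (cases "ip (bs!k) (bs!k) = 0")
    case True
    have "bs!k \<in> H1 G" using b k by auto
    then show ?thesis using ip_self_zero True by simp
  qed simp
  finally show ?thesis .
qed

lemma orth_snoc: "set bs \<subseteq> H1 G \<Longrightarrow> orth bs \<Longrightarrow> orth (bs @ [gs_step bs c])"
  unfolding orth_def
proof (intro allI impI)
  fix i j assume b: "set bs \<subseteq> H1 G" and o: "\<forall>i<length bs. \<forall>j<length bs. i \<noteq> j \<longrightarrow> ip (bs!i) (bs!j) = 0"
    and i: "i < length (bs @ [gs_step bs c])" and j: "j < length (bs @ [gs_step bs c])" and ij: "i \<noteq> j"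
  have o': "orth bs" using o unfolding orth_def .
  consider "i < length bs" "j < length bs" | "i = length bs" "j < length bs" | "i < length bs" "j = length bs"
    using i j ij by fastforce
  then show "ip ((bs @ [gs_step bs c]) ! i) ((bs @ [gs_step bs c]) ! j) = 0"
  proof cases
    case 1 then show ?thesis using o ij by (simp add: nth_append)
  next
    case 2 then show ?thesis using gs_step_orth[OF b o'] by (simp add: nth_append)
  next
    case 3 then show ?thesis using gs_step_orth[OF b o'] ip_sym by (simp add: nth_append)
  qed
qed

lemma inspan_snoc: "inspan bs x \<Longrightarrow> inspan (bs @ [b]) x"
  unfolding inspan_def
proof (elim exE)
  fix \<alpha> assume x: "x = (\<lambda>e. \<Sum>j<length bs. \<alpha> j * (bs ! j) e)"
  show "\<exists>\<alpha>. x = (\<lambda>e. \<Sum>j<length (bs @ [b]). \<alpha> j * ((bs @ [b]) ! j) e)"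
    by (rule exI[of _ "\<lambda>j. if j < length bs then \<alpha> j else 0"]) (simp add: x nth_append)
qed

lemma inspan_step: "inspan (bs @ [gs_step bs c]) c"
  unfolding inspan_def
  by (rule exI[of _ "\<lambda>j. if j < length bs then ip c (bs!j) / ip (bs!j) (bs!j) else 1"])
     (simp add: nth_append gs_step_def)

lemma gs_props:
  "set acc \<subseteq> H1 G \<Longrightarrow> orth acc \<Longrightarrow> set cs \<subseteq> H1 G \<Longrightarrow>
    set (gs acc cs) \<subseteq> H1 G \<and> orth (gs acc cs) \<and> (\<forall>x. inspan acc x \<longrightarrow> inspan (gs acc cs) x)
    \<and> (\<forall>c\<in>set cs. inspan (gs acc cs) c)"
proof (induction cs arbitrary: acc)
  case Nil then show ?case by simp
next
  case (Cons c cs)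
  let ?acc = "acc @ [gs_step acc c]"
  have a1: "set ?acc \<subseteq> H1 G" using Cons.prems gs_step_H1 by auto
  have a2: "orth ?acc" using orth_snoc Cons.prems by blast
  have IH: "set (gs ?acc cs) \<subseteq> H1 G \<and> orth (gs ?acc cs) \<and> (\<forall>x. inspan ?acc x \<longrightarrow> inspan (gs ?acc cs) x)
    \<and> (\<forall>c\<in>set cs. inspan (gs ?acc cs) c)"
    using Cons.IH[OF a1 a2] Cons.prems by simp
  then show ?case using inspan_snoc inspan_step by auto
qed

lemma proj_inspan:
  assumes b: "set bs \<subseteq> H1 G" and o: "orth bs" and x: "inspan bs x"
  shows "x = (\<lambda>e. \<Sum>j<length bs. (ip x (bs!j) / ip (bs!j) (bs!j)) * (bs!j) e)"
proof -
  obtain \<alpha> where a: "x = (\<lambda>e. \<Sum>j<length bs. \<alpha> j * (bs!j) e)" using x unfolding inspan_def by blast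
  have "(ip x (bs!j) / ip (bs!j) (bs!j)) * (bs!j) e = \<alpha> j * (bs!j) e" if j: "j < length bs" for j e
  proof (cases "ip (bs!j) (bs!j) = 0")
    case True
    have "bs!j \<in> H1 G" using b j by auto
    then have "bs!j = (\<lambda>_. 0)" using ip_pos True by auto
    then show ?thesis by simp
  next
    case False
    have "ip x (bs!j) = \<alpha> j * ip (bs!j) (bs!j)"
      unfolding a ip_sum_left using orth_sum[OF o j] .
    then show ?thesis using False by simp
  qed
  then show ?thesis by (subst (1) a) (intro ext sum.cong refl, simp)
qed

end

context RGuv begin

lemma chain_append: "chain (a @ b) = (\<lambda>f. chain a f + chain b f)"
  by (simp add: chain_def)

lemma chain_rp: "set t \<subseteq> edges G \<Longrightarrow> chain (rp G t) = (\<lambda>f. - chain t f)"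
proof (induction t)
  case Nil then show ?case by (simp add: chain_def)
next
  case (Cons g t)
  have g: "g \<in> edges G" using Cons.prems by simp
  have "chain [einv G g] = (\<lambda>f. - chain [g] f)"
    using g by (intro ext) (auto simp: chain_def dest: einv_einv)
  moreover have "chain (g # t) = (\<lambda>f. chain [g] f + chain t f)" by (simp add: chain_def)
  ultimately show ?case using Cons by (simp add: chain_append fun_eq_iff)
qed

lemma chain_single: "chain [g] f = (if f = g then 1 else 0) - (if f = einv G g then 1 else 0)"
  by (simp add: chain_def)

lemma span_chain:
  assumes w: "\<omega> \<in> H1 G"
  shows "(\<Sum>f\<in>edges G. \<omega> f * chain (hh f) g) = 2 * \<omega> g"
proof -
  have hh: "chain (hh f) g = chain (tau (src G f)) g + chain [f] g - chain (tau (tgt G f)) g" if "f \<in> edges G" for f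
    unfolding hh_def chain_append chain_rp[OF tau_E[OF tgt_V[OF that]]] by simp
  have "(\<Sum>f\<in>edges G. \<omega> f * chain (hh f) g)
      = (\<Sum>f\<in>edges G. \<omega> f * chain (tau (src G f)) g) + (\<Sum>f\<in>edges G. \<omega> f * chain [f] g) - (\<Sum>f\<in>edges G. \<omega> f * chain (tau (tgt G f)) g)"
    by (simp add: hh sum.distrib sum_subtractf distrib_left right_diff_distrib)
  also have "\<dots> = (\<Sum>f\<in>edges G. \<omega> f * chain [f] g)"
    using cyc_src[OF w, of "\<lambda>x. chain (tau x) g"] cyc_tgt[OF w, of "\<lambda>x. chain (tau x) g"] by simp
  also have "\<dots> = 2 * \<omega> g"
  proof (cases "g \<in> edges G")
    case True
    have "(\<Sum>f\<in>edges G. \<omega> f * chain [f] g) = (\<Sum>f\<in>edges G. if f = g then \<omega> f else 0) - (\<Sum>f\<in>edges G. if f = einv G g then \<omega> f else 0)"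
    proof -
      have "\<omega> f * chain [f] g = (if f = g then \<omega> f else 0) - (if f = einv G g then \<omega> f else 0)" if "f \<in> edges G" for f
        using that True by (auto simp: chain_single dest: einv_einv)
      then show ?thesis by (simp add: sum_subtractf)
    qed
    also have "\<dots> = \<omega> g - \<omega> (einv G g)" using True einv_edge fin_E by (simp add: sum.delta')
    also have "\<dots> = 2 * \<omega> g" using H1_anti[OF w True] by simp
    finally show ?thesis .
  next
    case False
    have "\<omega> f * chain [f] g = 0" if "f \<in> edges G" for f
      using that False einv_edge by (auto simp: chain_single)
    then have "(\<Sum>f\<in>edges G. \<omega> f * chain [f] g) = 0" by (intro sum.neutral) blast
    then show ?thesis using H1_zero[OF w False] by simp
  qed
  finally show ?thesis .
qed

definition Elist :: "'e list" where "Elist = (SOME l. set l = edges G \<and> distinct l)"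

lemma Elist: "set Elist = edges G" "distinct Elist"
  using someI_ex[OF finite_distinct_list[OF fin_E]] unfolding Elist_def by auto

definition cs0 :: "('e \<Rightarrow> rat) list" where "cs0 = map (\<lambda>f. chain (hh f)) Elist"

lemma cs0_H1: "set cs0 \<subseteq> H1 G"
  unfolding cs0_def using chain_H1[OF walk_hh] Elist(1) by auto

lemma H1_inspan_cs0: "\<omega> \<in> H1 G \<Longrightarrow> inspan cs0 \<omega>"
proof -
  assume w: "\<omega> \<in> H1 G"
  have "(\<Sum>j<length Elist. (\<omega> (Elist!j) / 2) * chain (hh (Elist!j)) g) = (\<Sum>f\<in>edges G. (\<omega> f / 2) * chain (hh f) g)" for g
  proof -
    have "(\<Sum>f\<in>edges G. (\<omega> f / 2) * chain (hh f) g) = (\<Sum>f\<in>(nth Elist) ` {..<length Elist}. (\<omega> f / 2) * chain (hh f) g)"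
      using Elist(1) by (simp add: atLeast0LessThan[symmetric] nth_image)
    also have "\<dots> = (\<Sum>j<length Elist. (\<omega> (Elist!j) / 2) * chain (hh (Elist!j)) g)"
      by (rule sum.reindex[unfolded comp_def]) (rule inj_on_nth[OF Elist(2)], simp)
    finally show ?thesis by simp
  qed
  moreover have "(\<Sum>f\<in>edges G. (\<omega> f / 2) * chain (hh f) g) = \<omega> g" for g
    using span_chain[OF w, of g] by (simp add: sum_divide_distrib[symmetric] mult.commute[of "_ / 2"] times_divide_eq_left)
  ultimately show ?thesis unfolding inspan_def cs0_def
    by (intro exI[of _ "\<lambda>j. \<omega> (Elist!j) / 2"]) (auto intro!: ext)
qed

definition bs0 :: "('e \<Rightarrow> rat) list" where "bs0 = gs [] cs0"

lemma bs0_props: "set bs0 \<subseteq> H1 G" "orth bs0"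
  and bs0_span: "\<omega> \<in> H1 G \<Longrightarrow> \<omega> = (\<lambda>e. \<Sum>j<length bs0. (ip \<omega> (bs0!j) / ip (bs0!j) (bs0!j)) * (bs0!j) e)"
proof -
  have P: "set bs0 \<subseteq> H1 G \<and> orth bs0 \<and> (\<forall>x. inspan [] x \<longrightarrow> inspan bs0 x) \<and> (\<forall>c\<in>set cs0. inspan bs0 c)"
    unfolding bs0_def by (rule gs_props) (simp_all add: orth_def cs0_H1)
  then show "set bs0 \<subseteq> H1 G" "orth bs0" by auto
  assume w: "\<omega> \<in> H1 G"
  obtain \<alpha> where a: "\<omega> = (\<lambda>e. \<Sum>j<length cs0. \<alpha> j * (cs0!j) e)" using H1_inspan_cs0[OF w] unfolding inspan_def by blast
  have "inspan bs0 (cs0!j)" if "j < length cs0" for j using P that by auto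
  then obtain \<beta> where b: "\<And>j. j < length cs0 \<Longrightarrow> cs0!j = (\<lambda>e. \<Sum>i<length bs0. \<beta> j i * (bs0!i) e)"
    unfolding inspan_def by metis
  have "\<omega> = (\<lambda>e. \<Sum>i<length bs0. (\<Sum>j<length cs0. \<alpha> j * \<beta> j i) * (bs0!i) e)"
    unfolding a by (intro ext) (simp add: b sum_distrib_left sum_distrib_right mult_ac sum.swap[of _ "{..<length cs0}"])
  then have "inspan bs0 \<omega>" unfolding inspan_def by (rule exI[of _ "\<lambda>i. \<Sum>j<length cs0. \<alpha> j * \<beta> j i"])
  then show "\<omega> = (\<lambda>e. \<Sum>j<length bs0. (ip \<omega> (bs0!j) / ip (bs0!j) (bs0!j)) * (bs0!j) e)"
    using proj_inspan P by blast
qed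

end


definition LS :: "nat \<Rightarrow> nat \<Rightarrow> nat list set" where
  "LS r k = {ms. set ms \<subseteq> {..<r} \<and> length ms = k}"

lemma LS_finite: "finite (LS r k)"
  unfolding LS_def by (rule finite_lists_length_eq) simp

lemma LS_0: "LS r 0 = {[]}" by (auto simp: LS_def)

lemma LS_Suc_sum: "(\<Sum>ms\<in>LS r (Suc k). F ms) = (\<Sum>m<r. \<Sum>ms\<in>LS r k. F (m # ms))"
proof -
  have "LS r (Suc k) = (\<lambda>(m, ms). m # ms) ` ({..<r} \<times> LS r k)"
  proof
    show "LS r (Suc k) \<subseteq> (\<lambda>(m, ms). m # ms) ` ({..<r} \<times> LS r k)"
    proof
      fix xs assume "xs \<in> LS r (Suc k)"
      then obtain m ms where "xs = m # ms" "m < r" "ms \<in> LS r k"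
        unfolding LS_def by (cases xs) auto
      then show "xs \<in> (\<lambda>(m, ms). m # ms) ` ({..<r} \<times> LS r k)" by force
    qed
  qed (auto simp: LS_def)
  moreover have "inj_on (\<lambda>(m, ms). m # ms) ({..<r} \<times> LS r k)" by (auto simp: inj_on_def)
  ultimately have "(\<Sum>ms\<in>LS r (Suc k). F ms) = (\<Sum>p\<in>{..<r} \<times> LS r k. F (fst p # snd p))"
    using sum.reindex[of "\<lambda>(m, ms). m # ms" "{..<r} \<times> LS r k" F] by (simp add: case_prod_beta comp_def)
  also have "\<dots> = (\<Sum>m<r. \<Sum>ms\<in>LS r k. F (m # ms))"
    by (rule sum.cartesian_product[symmetric, unfolded case_prod_beta])
  finally show ?thesis .
qed

context RGuv begin

abbreviation r where "r \<equiv> length bs0"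
definition bb :: "nat \<Rightarrow> 'e \<Rightarrow> rat" where "bb j = bs0 ! j"
definition dd :: "nat \<Rightarrow> rat" where "dd j = ip (bb j) (bb j)"
definition alpha :: "nat \<Rightarrow> ('e \<Rightarrow> rat) \<Rightarrow> rat" where "alpha j \<omega> = ip \<omega> (bb j) / dd j"

lemma bb_H1: "j < r \<Longrightarrow> bb j \<in> H1 G"
  using bs0_props(1) unfolding bb_def by auto

lemma bb_orth: "i < r \<Longrightarrow> j < r \<Longrightarrow> i \<noteq> j \<Longrightarrow> ip (bb i) (bb j) = 0"
  using bs0_props(2) unfolding orth_def bb_def by blast

lemma dd_zero: "j < r \<Longrightarrow> dd j = 0 \<Longrightarrow> bb j = (\<lambda>_. 0)"
  using ip_pos bb_H1 unfolding dd_def by blast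

lemma H1_expand: "\<omega> \<in> H1 G \<Longrightarrow> \<omega> = (\<lambda>e. \<Sum>j<r. alpha j \<omega> * bb j e)"
  using bs0_span unfolding alpha_def bb_def dd_def by blast

lemma map_bb_H1: "ms \<in> LS r k \<Longrightarrow> set (map bb ms) \<subseteq> H1 G"
  unfolding LS_def using bb_H1 by auto

definition gam0 where "gam0 = hclass G u v (u, tau v)"

lemma gam0_pi1: "gam0 \<in> pi1 G u v"
  unfolding gam0_def by (rule hclass_in_pi1) (simp add: paths_iff walk_tau vV)

fun Y :: "('e \<Rightarrow> rat) list \<Rightarrow> ('v \<times> 'e list) set \<Rightarrow> rat" where
  "Y [] = delta gam0"
| "Y (z # zs) = amul G u v (Y zs) (LL z)"

lemma Y_W: "Y zs \<in> W (length zs)"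
proof (induction zs)
  case Nil then show ?case using delta_QPi[OF gam0_pi1] by simp
next
  case (Cons z zs)
  then show ?case using W_gen[OF Cons.IH LL_J] by simp
qed

lemma Y_QPi: "Y zs \<in> QPi G u v" using Y_W W_QPi by blast

lemma Y_zero: "(\<lambda>_. 0) \<in> set zs \<Longrightarrow> Y zs = (\<lambda>_. 0)"
proof (induction zs)
  case Nil then show ?case by simp
next
  case (Cons z zs)
  show ?case
  proof (cases "z = (\<lambda>_. 0)")
    case True then show ?thesis by (simp add: LL_zero amul_gmul)
  next
    case False
    then have "Y zs = (\<lambda>_. 0)" using Cons by simp
    then show ?thesis by (simp add: amul_gmul)
  qed
qed

lemma aint_Y:
  "set zs \<subseteq> H1 G \<Longrightarrow> set ws \<subseteq> H1 G \<Longrightarrow> length ws = length zs \<Longrightarrow>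
    aint G (Y zs) ws = prod_list (map2 ip zs ws)"
proof (induction zs arbitrary: ws)
  case Nil
  then show ?case using gam0_pi1 by (simp add: aint_delta)
next
  case (Cons z zs)
  obtain w ws' where ws: "ws = w # ws'" using Cons.prems(3) by (cases ws) auto
  let ?k = "length zs"
  have w: "w \<in> H1 G" "set ws' \<subseteq> H1 G" using Cons.prems(2) ws by auto
  have z: "z \<in> H1 G" "set zs \<subseteq> H1 G" using Cons.prems(1) by auto
  have lw: "length ws' = ?k" using Cons.prems(3) ws by simp
  have fY: "fs (Y zs)" using Y_QPi QPi_fs by blast
  have fL: "fs (LL z)" using LL_QPi QPi_fs by blast
  have "aint G (Y (z # zs)) ws = conv (aint G (Y zs)) (aint G (LL z)) ws"
    using aint_amul[OF fY fL Cons.prems(2)] by simp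
  also have "\<dots> = (\<Sum>i\<in>{1}. aint G (Y zs) (drop i ws) * aint G (LL z) (take i ws))"
    unfolding conv_def
  proof (rule sum.mono_neutral_right)
    show "\<forall>i\<in>{..length ws} - {1}. aint G (Y zs) (drop i ws) * aint G (LL z) (take i ws) = 0"
    proof
      fix i assume i: "i \<in> {..length ws} - {1}"
      show "aint G (Y zs) (drop i ws) * aint G (LL z) (take i ws) = 0"
      proof (cases "i = 0")
        case True then show ?thesis using aint_J_Nil[OF LL_J] by simp
      next
        case False
        then have "length (drop i ws) < ?k" using i lw ws by auto
        moreover have "set (drop i ws) \<subseteq> H1 G" using Cons.prems(2) by (meson order_trans set_drop_subset)
        ultimately have "aint G (Y zs) (drop i ws) = 0" using aint_W[OF Y_W] by blast
        then show ?thesis by simp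
      qed
    qed
  qed (auto simp: ws)
  also have "\<dots> = aint G (Y zs) ws' * aint G (LL z) [w]" by (simp add: ws)
  also have "\<dots> = prod_list (map2 ip zs ws') * ip z w"
    using Cons.IH[OF z(2) w(2) lw] aint_LL[OF z(1) w(1)] by simp
  finally show ?case by (simp add: ws)
qed

definition Comb :: "nat \<Rightarrow> (nat list \<Rightarrow> rat) \<Rightarrow> ('v \<times> 'e list) set \<Rightarrow> rat" where
  "Comb k y = (\<lambda>c. \<Sum>ms\<in>LS r k. y ms * Y (map bb ms) c)"

lemma Comb_W: "Comb k y \<in> W k"
  unfolding Comb_def
proof (rule lsub_sum[OF lsub_W LS_finite])
  fix ms assume "ms \<in> LS r k"
  then have "length (map bb ms) = k" by (simp add: LS_def)
  then show "Y (map bb ms) \<in> W k" using Y_W[of "map bb ms"] by simp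
qed

lemma Comb_QPi: "Comb k y \<in> QPi G u v" using Comb_W W_QPi by blast

lemma aint_Comb: "aint G (Comb k y) ws = (\<Sum>ms\<in>LS r k. y ms * aint G (Y (map bb ms)) ws)"
  unfolding Comb_def by (rule aint_sum[OF LS_finite]) (use Y_QPi QPi_fs in blast)

lemma Comb_lin: "Comb k (\<lambda>ms. a * y ms + z ms) = (\<lambda>c. a * Comb k y c + Comb k z c)"
  unfolding Comb_def by (intro ext) (simp add: distrib_right sum.distrib sum_distrib_left mult.assoc)

lemma prodip_orth:
  assumes ms: "ms \<in> LS r k" and ms': "ms' \<in> LS r k" and ne: "ms \<noteq> ms'"
  shows "prod_list (map2 ip (map bb ms) (map bb ms')) = 0"
proof -
  have l: "length ms = length ms'" using ms ms' by (simp add: LS_def)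
  obtain j where j: "j < length ms" "ms!j \<noteq> ms'!j" using l ne nth_equalityI by blast
  have "(bb (ms!j), bb (ms'!j)) \<in> set (zip (map bb ms) (map bb ms'))"
    using j l by (auto simp: set_zip intro!: exI[of _ j])
  moreover have "ip (bb (ms!j)) (bb (ms'!j)) = 0"
  proof (rule bb_orth)
    show "ms!j < r" using j ms nth_mem unfolding LS_def by blast
    show "ms'!j < r" using j ms' l nth_mem unfolding LS_def by (metis (no_types, lifting) lessThan_iff mem_Collect_eq subsetD)
  qed (use j in simp)
  ultimately have "0 \<in> set (map2 ip (map bb ms) (map bb ms'))" by force
  then show ?thesis by (simp add: prod_list_zero_iff)
qed

lemma aint_Comb_basis:
  assumes ms': "ms' \<in> LS r k"
  shows "aint G (Comb k y) (map bb ms') = y ms' * prod_list (map2 ip (map bb ms') (map bb ms'))"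
proof -
  have "aint G (Comb k y) (map bb ms') = (\<Sum>ms\<in>LS r k. y ms * prod_list (map2 ip (map bb ms) (map bb ms')))"
    unfolding aint_Comb
    by (intro sum.cong refl) (use ms' map_bb_H1 in \<open>simp add: aint_Y LS_def\<close>)
  also have "\<dots> = (\<Sum>ms\<in>LS r k. if ms = ms' then y ms' * prod_list (map2 ip (map bb ms') (map bb ms')) else 0)"
    by (intro sum.cong refl) (use prodip_orth ms' in auto)
  also have "\<dots> = y ms' * prod_list (map2 ip (map bb ms') (map bb ms'))"
    using ms' LS_finite by (simp add: sum.delta')
  finally show ?thesis .
qed

lemma prodip_self: "ms \<in> LS r k \<Longrightarrow> prod_list (map2 ip (map bb ms) (map bb ms)) = 0 \<Longrightarrow> Y (map bb ms) = (\<lambda>_. 0)"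
proof -
  assume ms: "ms \<in> LS r k" and z: "prod_list (map2 ip (map bb ms) (map bb ms)) = 0"
  then have "0 \<in> set (map2 ip (map bb ms) (map bb ms))" by (simp add: prod_list_zero_iff)
  then obtain j where j: "j \<in> set ms" "dd j = 0" by (auto simp: zip_same dd_def)
  then have "bb j = (\<lambda>_. 0)" using dd_zero ms unfolding LS_def by auto
  then have "(\<lambda>_. 0) \<in> set (map bb ms)" using j by force
  then show ?thesis by (rule Y_zero)
qed

end


lemma lsub_fs: "lsub {A :: 'c \<Rightarrow> rat. fs A}"
  unfolding lsub_def using fs_lin by auto

lemma fs_sum: "finite I \<Longrightarrow> (\<And>i. i \<in> I \<Longrightarrow> fs (X i)) \<Longrightarrow> fs (\<lambda>c. \<Sum>i\<in>I. w i * X i c)"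
  using lsub_sum[OF lsub_fs, of I X w] by auto

declare Wfilt.simps(2)[simp del]

context RG begin

lemma amul_sum_left:
  assumes I: "finite I" and X: "\<And>i. i \<in> I \<Longrightarrow> fs (X i)" and B: "fs B"
  shows "amul G x z (\<lambda>c. \<Sum>i\<in>I. w i * X i c) B = (\<lambda>c. \<Sum>i\<in>I. w i * amul G x z (X i) B c)"
  using I X
proof (induction I rule: finite_induct)
  case empty then show ?case by (simp add: amul_gmul)
next
  case (insert a F)
  have f: "fs (\<lambda>c. \<Sum>i\<in>F. w i * X i c)" using fs_sum insert by blast
  have "amul G x z (\<lambda>c. \<Sum>i\<in>insert a F. w i * X i c) B = amul G x z (\<lambda>c. w a * X a c + (\<Sum>i\<in>F. w i * X i c)) B"
    using insert by simp
  also have "\<dots> = (\<lambda>c. w a * amul G x z (X a) B c + amul G x z (\<lambda>c. \<Sum>i\<in>F. w i * X i c) B c)"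
    by (rule amul_lin_left) (use insert f B in auto)
  finally show ?case using insert by simp
qed

lemma amul_sum_right:
  assumes I: "finite I" and X: "\<And>i. i \<in> I \<Longrightarrow> fs (X i)" and A: "fs A"
  shows "amul G x z A (\<lambda>c. \<Sum>i\<in>I. w i * X i c) = (\<lambda>c. \<Sum>i\<in>I. w i * amul G x z A (X i) c)"
  using I X
proof (induction I rule: finite_induct)
  case empty then show ?case by (simp add: amul_gmul)
next
  case (insert a F)
  have f: "fs (\<lambda>c. \<Sum>i\<in>F. w i * X i c)" using fs_sum insert by blast
  have "amul G x z A (\<lambda>c. \<Sum>i\<in>insert a F. w i * X i c) = amul G x z A (\<lambda>c. w a * X a c + (\<Sum>i\<in>F. w i * X i c))"
    using insert by simp
  also have "\<dots> = (\<lambda>c. w a * amul G x z A (X a) c + amul G x z A (\<lambda>c. \<Sum>i\<in>F. w i * X i c) c)"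
    by (rule amul_lin_right) (use insert f A in auto)
  finally show ?case using insert by simp
qed

end

context RGuv begin

lemma amul_J2:
  assumes Z: "Z \<in> W k" and B2: "B2 \<in> J2"
  shows "amul G u v Z B2 \<in> W (Suc (Suc k))"
proof -
  have ZQ: "Z \<in> QPi G u v" using Z W_QPi by blast
  let ?T = "{B \<in> QPi G u u. amul G u v Z B \<in> W (Suc (Suc k))}"
  have "lsub ?T"
    unfolding lsub_def
  proof (intro conjI ballI allI)
    show "(\<lambda>_. 0) \<in> ?T" using lsubD(1)[OF lsub_QPi] lsubD(1)[OF lsub_W] by (simp add: amul_gmul)
    fix X Y s assume X: "X \<in> ?T" and Y: "Y \<in> ?T"
    have "amul G u v Z (\<lambda>c. s * X c + Y c) = (\<lambda>c. s * amul G u v Z X c + amul G u v Z Y c)"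
      by (rule amul_lin_right) (use X Y ZQ QPi_fs in blast)+
    then show "(\<lambda>c. s * X c + Y c) \<in> ?T"
      using X Y lsubD(2)[OF lsub_W] lsubD(2)[OF lsub_QPi] by auto
  qed
  moreover have "{amul G u u B1 B2 | B1 B2. B1 \<in> J \<and> B2 \<in> J} \<subseteq> ?T"
  proof
    fix B assume "B \<in> {amul G u u B1 B2 | B1 B2. B1 \<in> J \<and> B2 \<in> J}"
    then obtain B1 B1' where B: "B = amul G u u B1 B1'" "B1 \<in> J" "B1' \<in> J" by blast
    have "amul G u v Z B = amul G u v (amul G u v Z B1) B1'"
      unfolding B(1) by (rule amul_assoc[symmetric]) (use ZQ B J_QPi in auto)
    also have "\<dots> \<in> W (Suc (Suc k))" by (rule W_gen[OF W_gen[OF Z B(2)] B(3)])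
    moreover have "B \<in> QPi G u u" using B(1) amul_QPi[OF J_QPi[OF B(2)] J_QPi[OF B(3)]] by simp
    ultimately show "B \<in> ?T" by simp
  qed
  ultimately have "J2 \<subseteq> ?T" unfolding J2_def by (rule rspan_sub[rotated])
  then show ?thesis using B2 by blast
qed

lemma gam0_split: "c \<in> pi1 G u v \<Longrightarrow> \<exists>g\<in>pi1 G u u. ccomp G u v gam0 g = c"
proof -
  assume c: "c \<in> pi1 G u v"
  note rc = rep_pi1[OF c]
  let ?p = "(u, snd (rep c) @ rp G (tau v))"
  have wt: "walk G u (tau v) v" using walk_tau[OF vV] .
  have p: "?p \<in> paths G u u" using walk_appendI[OF rc(4) walk_rp[OF wt]] by (simp add: paths_iff)
  have "ccomp G u v gam0 (hclass G u u ?p) = hclass G u v (u, snd ?p @ tau v)"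
    unfolding gam0_def using ccomp_hclass[OF p, of "(u, tau v)" v] by (simp add: paths_iff wt)
  also have "\<dots> = hclass G u v (u, snd (rep c))"
  proof -
    have w: "walk G u (snd (rep c) @ rp G (tau v) @ tau v @ []) v"
      using walk_appendI[OF rc(4) walk_appendI[OF walk_rp[OF wt] wt]] by simp
    show ?thesis unfolding hclass_eq_iff using cancel_rp'[OF w tau_E[OF vV]] by simp
  qed
  also have "\<dots> = c" using rc by (metis prod.collapse)
  finally show ?thesis using hclass_in_pi1[OF p] by blast
qed

lemma amul_gam0_D: "x \<in> pi1 G u u \<Longrightarrow>
  amul G u v (delta gam0) (D x) = (\<lambda>c. delta (ccomp G u v gam0 x) c - delta gam0 c)"
proof -
  assume x: "x \<in> pi1 G u u"
  have "amul G u v (delta gam0) (D x) = amul G u v (delta gam0) (\<lambda>c. (-1) * delta one c + delta x c)"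
    by (simp add: D_def)
  also have "\<dots> = (\<lambda>c. (-1) * delta (ccomp G u v gam0 one) c + delta (ccomp G u v gam0 x) c)"
    by (subst amul_lin_right) (simp_all add: amul_delta)
  also have "\<dots> = (\<lambda>c. delta (ccomp G u v gam0 x) c - delta gam0 c)"
    using ccomp_one_right[OF gam0_pi1] by (simp add: one_def)
  finally show ?thesis .
qed

lemma R0: "A \<in> QPi G u v \<Longrightarrow> \<exists>y. (\<lambda>c. A c - Comb 0 y c) \<in> W (Suc 0)"
proof -
  assume A: "A \<in> QPi G u v"
  have f: "finite (supp A)" using A QPi_fs by blast
  have "\<forall>c\<in>supp A. \<exists>g\<in>pi1 G u u. ccomp G u v gam0 g = c"
    using A gam0_split unfolding QPi_def by blast
  then obtain g where g: "\<And>c. c \<in> supp A \<Longrightarrow> g c \<in> pi1 G u u \<and> ccomp G u v gam0 (g c) = c" by metis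
  let ?y = "\<lambda>_::nat list. \<Sum>c\<in>supp A. A c"
  have "(\<lambda>x. A x - Comb 0 ?y x) = (\<lambda>x. \<Sum>c\<in>supp A. A c * amul G u v (delta gam0) (D (g c)) x)"
  proof (intro ext)
    fix x
    have "Comb 0 ?y x = (\<Sum>c\<in>supp A. A c) * delta gam0 x" by (simp add: Comb_def LS_0)
    moreover have "(\<Sum>c\<in>supp A. A c * amul G u v (delta gam0) (D (g c)) x) = (\<Sum>c\<in>supp A. A c * delta c x) - (\<Sum>c\<in>supp A. A c) * delta gam0 x"
    proof -
      have "(\<Sum>c\<in>supp A. A c * amul G u v (delta gam0) (D (g c)) x) = (\<Sum>c\<in>supp A. A c * (delta c x - delta gam0 x))"
        by (intro sum.cong refl) (simp add: amul_gam0_D g)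
      then show ?thesis by (simp add: right_diff_distrib sum_subtractf sum_distrib_right)
    qed
    ultimately show "A x - Comb 0 ?y x = (\<Sum>c\<in>supp A. A c * amul G u v (delta gam0) (D (g c)) x)"
      using sum_delta_fs[OF f] by simp
  qed
  moreover have "(\<lambda>x. \<Sum>c\<in>supp A. A c * amul G u v (delta gam0) (D (g c)) x) \<in> W (Suc 0)"
  proof (rule lsub_sum[OF lsub_W f])
    fix c assume "c \<in> supp A"
    then show "amul G u v (delta gam0) (D (g c)) \<in> W (Suc 0)"
      using W_gen[of "delta gam0" 0 "D (g c)"] delta_QPi[OF gam0_pi1] D_J g by simp
  qed
  ultimately show ?thesis by (intro exI[of _ ?y]) simp
qed

lemma amul_Comb_LL: "amul G u v (Comb k y) (LL (bb j)) = (\<lambda>c. \<Sum>ms\<in>LS r k. y ms * Y (map bb (j # ms)) c)"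
  unfolding Comb_def
  by (subst amul_sum_left[OF LS_finite]) (use QPi_fs[OF Y_QPi] QPi_fs[OF LL_QPi] in auto)

lemma Rk: "A \<in> W k \<Longrightarrow> \<exists>y. (\<lambda>c. A c - Comb k y c) \<in> W (Suc k)"
proof (induction k arbitrary: A)
  case 0 then show ?case using R0 by simp
next
  case (Suc k)
  let ?T = "{A \<in> QPi G u v. \<exists>y. (\<lambda>c. A c - Comb (Suc k) y c) \<in> W (Suc (Suc k))}"
  have "lsub ?T"
    unfolding lsub_def
  proof (intro conjI ballI allI)
    have "Comb (Suc k) (\<lambda>_. 0) = (\<lambda>_. 0)" by (simp add: Comb_def)
    then show "(\<lambda>_. 0) \<in> ?T" using lsubD(1)[OF lsub_QPi] lsubD(1)[OF lsub_W] by (auto intro!: exI[of _ "\<lambda>_. 0"])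
    fix X Z s assume X: "X \<in> ?T" and Z: "Z \<in> ?T"
    then obtain y1 y2 where y1: "(\<lambda>c. X c - Comb (Suc k) y1 c) \<in> W (Suc (Suc k))"
      and y2: "(\<lambda>c. Z c - Comb (Suc k) y2 c) \<in> W (Suc (Suc k))" by blast
    have "(\<lambda>c. (s * X c + Z c) - Comb (Suc k) (\<lambda>ms. s * y1 ms + y2 ms) c)
        = (\<lambda>c. s * (X c - Comb (Suc k) y1 c) + (Z c - Comb (Suc k) y2 c))"
      unfolding Comb_lin by (simp add: algebra_simps)
    then have "(\<lambda>c. (s * X c + Z c) - Comb (Suc k) (\<lambda>ms. s * y1 ms + y2 ms) c) \<in> W (Suc (Suc k))"
      using lsubD(2)[OF lsub_W y1 y2] by simp
    then show "(\<lambda>c. s * X c + Z c) \<in> ?T" using X Z lsubD(2)[OF lsub_QPi] by blast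
  qed
  moreover have "{amul G u v X B |X B. X \<in> W k \<and> B \<in> J} \<subseteq> ?T"
  proof
    fix A' assume "A' \<in> {amul G u v X B |X B. X \<in> W k \<and> B \<in> J}"
    then obtain X B where A': "A' = amul G u v X B" and X: "X \<in> W k" and B: "B \<in> J" by blast
    obtain y where y: "(\<lambda>c. X c - Comb k y c) \<in> W (Suc k)" using Suc.IH[OF X] by blast
    let ?X' = "\<lambda>c. X c - Comb k y c"
    let ?z = "zetaB B"
    have z: "?z \<in> H1 G" using zetaB_H1[OF B] .
    let ?B2 = "\<lambda>c. B c - LL ?z c"
    have B2: "?B2 \<in> J2" using J_L[OF B] .
    have XQ: "X \<in> QPi G u v" using X W_QPi by blast
    have X'Q: "?X' \<in> QPi G u v" using y W_QPi by blast
    have CQ: "Comb k y \<in> QPi G u v" by (rule Comb_QPi)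
    have BQ: "B \<in> QPi G u u" using B J_QPi by blast
    have B2Q: "?B2 \<in> QPi G u u" using B2 J2_QPi by blast
    have LQ: "LL ?z \<in> QPi G u u" by (rule LL_QPi)
    define y' where "y' ms = (case ms of [] \<Rightarrow> 0 | j # ms' \<Rightarrow> alpha j ?z * y ms')" for ms
    have eX: "X = (\<lambda>c. 1 * ?X' c + Comb k y c)" by simp
    have eB: "B = (\<lambda>c. 1 * ?B2 c + LL ?z c)" by simp
    have "amul G u v X B = (\<lambda>c. amul G u v ?X' B c + amul G u v (Comb k y) B c)"
      by (subst eX, subst amul_lin_left) (use X'Q CQ BQ QPi_fs in auto)
    also have "amul G u v (Comb k y) B = (\<lambda>c. amul G u v (Comb k y) ?B2 c + amul G u v (Comb k y) (LL ?z) c)"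
      by (subst eB, subst amul_lin_right) (use B2Q LQ CQ QPi_fs in auto)
    also have "amul G u v (Comb k y) (LL ?z) = Comb (Suc k) y'"
    proof -
      have "LL ?z = LL (\<lambda>e. \<Sum>j<r. alpha j ?z * bb j e)" using H1_expand[OF z] by simp
      also have "\<dots> = (\<lambda>c. \<Sum>j<r. alpha j ?z * LL (bb j) c)" by (rule LL_sum) simp
      moreover have "amul G u v (Comb k y) (\<lambda>c. \<Sum>j<r. alpha j ?z * LL (bb j) c) = (\<lambda>c. \<Sum>j<r. alpha j ?z * amul G u v (Comb k y) (LL (bb j)) c)"
        by (rule amul_sum_right) (use QPi_fs[OF LL_QPi] QPi_fs[OF CQ] in auto)
      ultimately have "amul G u v (Comb k y) (LL ?z) = (\<lambda>c. \<Sum>j<r. alpha j ?z * amul G u v (Comb k y) (LL (bb j)) c)"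
        by simp
      also have "\<dots> = (\<lambda>c. \<Sum>j<r. \<Sum>ms\<in>LS r k. alpha j ?z * y ms * Y (map bb (j # ms)) c)"
        unfolding amul_Comb_LL by (simp add: sum_distrib_left mult.assoc)
      also have "\<dots> = Comb (Suc k) y'"
        unfolding Comb_def LS_Suc_sum by (simp add: y'_def)
      finally show ?thesis .
    qed
    finally have eq: "amul G u v X B = (\<lambda>c. amul G u v ?X' B c + (amul G u v (Comb k y) ?B2 c + Comb (Suc k) y' c))" .
    have "(\<lambda>c. A' c - Comb (Suc k) y' c) = (\<lambda>c. amul G u v ?X' B c + amul G u v (Comb k y) ?B2 c)"
      unfolding A' eq by simp
    also have "\<dots> \<in> W (Suc (Suc k))"
      by (rule lsub_add[OF lsub_W W_gen[OF y B] amul_J2[OF Comb_W B2]])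
    finally have "(\<lambda>c. A' c - Comb (Suc k) y' c) \<in> W (Suc (Suc k))" .
    moreover have "A' \<in> QPi G u v" using A' amul_QPi[OF XQ BQ] by simp
    ultimately show "A' \<in> ?T" by blast
  qed
  ultimately have "W (Suc k) \<subseteq> ?T" unfolding Wfilt.simps by (rule rspan_sub[rotated])
  then show ?case using Suc.prems by blast
qed

lemma partb:
  assumes A: "A \<in> QPi G u v"
    and z: "\<And>m ws. m \<le> n \<Longrightarrow> length ws = m \<Longrightarrow> set ws \<subseteq> H1 G \<Longrightarrow> aint G A ws = 0"
  shows "A \<in> W (Suc n)"
proof -
  have "k \<le> Suc n \<Longrightarrow> A \<in> W k" for k
  proof (induction k)
    case 0 then show ?case using A by simp
  next
    case (Suc k)
    then have Ak: "A \<in> W k" and kn: "k \<le> n" by auto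
    obtain y where y: "(\<lambda>c. A c - Comb k y c) \<in> W (Suc k)" using Rk[OF Ak] by blast
    have "Comb k y = (\<lambda>_. 0)"
    proof -
      have "y ms * Y (map bb ms) c = 0" if ms: "ms \<in> LS r k" for ms c
      proof -
        have l: "length (map bb ms) = k" using ms by (simp add: LS_def)
        have H: "set (map bb ms) \<subseteq> H1 G" using map_bb_H1[OF ms] .
        have fA: "fs A" "fs (Comb k y)" using A Comb_QPi QPi_fs by blast+
        have "aint G (Comb k y) (map bb ms) = aint G A (map bb ms) - aint G (\<lambda>c. A c - Comb k y c) (map bb ms)"
          using aint_diff[OF fA] by simp
        also have "\<dots> = 0" using z[OF kn l H] aint_W[OF y H] l by simp
        finally have "y ms * prod_list (map2 ip (map bb ms) (map bb ms)) = 0"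
          using aint_Comb_basis[OF ms] by simp
        then show ?thesis using prodip_self[OF ms] by auto
      qed
      then show ?thesis unfolding Comb_def by (intro ext sum.neutral) blast
    qed
    then show ?case using y by simp
  qed
  then show ?thesis by simp
qed

end


lemma prod_list_upd: "k < length zs \<Longrightarrow>
  prod_list (map f (zs[k := x])) = prod_list (map f (take k zs)) * f x * prod_list (map f (drop (Suc k) zs))"
  by (simp add: upd_conv_take_nth_drop mult.assoc)

lemma edge_int_ml:
  assumes k: "k < length zs"
  shows "edge_int G e (zs[k := (\<lambda>e. a * \<omega> e + b * \<omega>' e)]) = a * edge_int G e (zs[k := \<omega>]) + b * edge_int G e (zs[k := \<omega>'])"
proof -
  let ?f = "\<lambda>\<omega>::'a \<Rightarrow> rat. len G e * \<omega> e"
  let ?P = "prod_list (map ?f (take k zs))" and ?Q = "prod_list (map ?f (drop (Suc k) zs))"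
  have "edge_int G e (zs[k := (\<lambda>e. a * \<omega> e + b * \<omega>' e)]) = ?P * (len G e * (a * \<omega> e + b * \<omega>' e)) * ?Q / fact (length zs)"
    unfolding edge_int_def using prod_list_upd[OF k, of ?f] by simp
  also have "\<dots> = a * (?P * (len G e * \<omega> e) * ?Q / fact (length zs)) + b * (?P * (len G e * \<omega>' e) * ?Q / fact (length zs))"
    by (simp add: algebra_simps add_divide_distrib)
  also have "\<dots> = a * edge_int G e (zs[k := \<omega>]) + b * edge_int G e (zs[k := \<omega>'])"
    unfolding edge_int_def using prod_list_upd[OF k, of ?f] by simp
  finally show ?thesis .
qed

lemma hcp_rev_ml:
  "i < length ws \<Longrightarrow> hcp_rev G es (ws[i := (\<lambda>e. a * \<omega> e + b * \<omega>' e)])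
     = a * hcp_rev G es (ws[i := \<omega>]) + b * hcp_rev G es (ws[i := \<omega>'])"
proof (induction es arbitrary: ws i)
  case Nil
  have ne: "ws[i := x] \<noteq> []" for x using Nil by (metis length_list_update list.size(3) not_less0)
  have "ws \<noteq> []" using Nil by auto
  then show ?case by (simp add: ne)
next
  case (Cons e es)
  let ?n = "length ws"
  let ?T = "\<lambda>x j. edge_int G e (drop j (ws[i := x])) * hcp_rev G es (take j (ws[i := x]))"
  have t: "?T (\<lambda>e. a * \<omega> e + b * \<omega>' e) j = a * ?T \<omega> j + b * ?T \<omega>' j" if j: "j \<le> ?n" for j
  proof (cases "i < j")
    case True
    have "?T (\<lambda>e. a * \<omega> e + b * \<omega>' e) j = edge_int G e (drop j ws) * hcp_rev G es ((take j ws)[i := (\<lambda>e. a * \<omega> e + b * \<omega>' e)])"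
      using True by (simp add: take_update_swap)
    also have "\<dots> = edge_int G e (drop j ws) * (a * hcp_rev G es ((take j ws)[i := \<omega>]) + b * hcp_rev G es ((take j ws)[i := \<omega>']))"
      using Cons.IH[of i "take j ws"] True j by simp
    also have "\<dots> = a * ?T \<omega> j + b * ?T \<omega>' j"
      using True by (simp add: take_update_swap algebra_simps)
    finally show ?thesis .
  next
    case False
    have k: "i - j < length (drop j ws)" using False Cons.prems by simp
    have "?T (\<lambda>e. a * \<omega> e + b * \<omega>' e) j = edge_int G e ((drop j ws)[i - j := (\<lambda>e. a * \<omega> e + b * \<omega>' e)]) * hcp_rev G es (take j ws)"
      using False by (simp add: drop_update_swap)
    also have "\<dots> = (a * edge_int G e ((drop j ws)[i - j := \<omega>]) + b * edge_int G e ((drop j ws)[i - j := \<omega>'])) * hcp_rev G es (take j ws)"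
      by (subst edge_int_ml[OF k]) (rule refl)
    also have "\<dots> = a * ?T \<omega> j + b * ?T \<omega>' j"
      using False by (simp add: drop_update_swap algebra_simps)
    finally show ?thesis .
  qed
  have "hcp_rev G (e # es) (ws[i := (\<lambda>e. a * \<omega> e + b * \<omega>' e)]) = (\<Sum>j\<le>?n. ?T (\<lambda>e. a * \<omega> e + b * \<omega>' e) j)"
    by (simp add: hcp_rev.simps(2))
  also have "\<dots> = (\<Sum>j\<le>?n. a * ?T \<omega> j + b * ?T \<omega>' j)" using t by simp
  also have "\<dots> = a * hcp_rev G (e # es) (ws[i := \<omega>]) + b * hcp_rev G (e # es) (ws[i := \<omega>'])"
    by (simp add: hcp_rev.simps(2) sum.distrib sum_distrib_left)
  finally show ?case .
qed

lemma aint_multilin: "multilin H m (aint G A)"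
  unfolding multilin_def aint_def
proof (intro allI impI)
  fix ws i a b \<omega> \<omega>' assume "length ws = m \<and> set ws \<subseteq> H \<and> i < m \<and> \<omega> \<in> H \<and> \<omega>' \<in> H"
  then have i: "i < length ws" by simp
  show "(\<Sum>c\<in>supp A. A c * hcp G (rep c) (ws[i := \<lambda>e. a * \<omega> e + b * \<omega>' e]))
      = a * (\<Sum>c\<in>supp A. A c * hcp G (rep c) (ws[i := \<omega>])) + b * (\<Sum>c\<in>supp A. A c * hcp G (rep c) (ws[i := \<omega>']))"
    by (simp add: hcp_def hcp_rev_ml[OF i] sum.distrib sum_distrib_left algebra_simps)
qed

lemma multilin_diff: "multilin H m f \<Longrightarrow> multilin H m g \<Longrightarrow> multilin H m (\<lambda>ws. f ws - g ws)"
  unfolding multilin_def by (simp add: algebra_simps)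

lemma multilin_shift: "multilin H (Suc k) f \<Longrightarrow> x \<in> H \<Longrightarrow> multilin H k (\<lambda>ws. f (x # ws))"
  unfolding multilin_def
proof (intro allI impI)
  fix ws i a b \<omega> \<omega>'
  assume f: "\<forall>ws i a b \<omega> \<omega>'. length ws = Suc k \<and> set ws \<subseteq> H \<and> i < Suc k \<and> \<omega> \<in> H \<and> \<omega>' \<in> H \<longrightarrow>
        f (ws[i := \<lambda>e. a * \<omega> e + b * \<omega>' e]) = a * f (ws[i := \<omega>]) + b * f (ws[i := \<omega>'])"
    and x: "x \<in> H" and h: "length ws = k \<and> set ws \<subseteq> H \<and> i < k \<and> \<omega> \<in> H \<and> \<omega>' \<in> H"
  show "f (x # ws[i := \<lambda>e. a * \<omega> e + b * \<omega>' e]) = a * f (x # ws[i := \<omega>]) + b * f (x # ws[i := \<omega>'])"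
    using f[rule_format, of "x # ws" "Suc i" \<omega> \<omega>' a b] x h by simp
qed

lemma multilin_pos0_sum:
  fixes R :: nat
  assumes f: "multilin H (Suc k) f" and H: "lsub H"
    and ws: "length ws = k" "set ws \<subseteq> H"
  shows "(\<And>m. m < R \<Longrightarrow> B m \<in> H) \<Longrightarrow> f ((\<lambda>e. \<Sum>m<R. c m * B m e) # ws) = (\<Sum>m<R. c m * f (B m # ws))"
proof (induction R)
  case 0
  have z: "(\<lambda>_. 0) \<in> H" using lsubD(1)[OF H] .
  have "f (((\<lambda>_. 0) # ws)[0 := (\<lambda>e. 0 * (0::rat) + 0 * 0)]) = 0 * f (((\<lambda>_. 0) # ws)[0 := (\<lambda>_. 0)]) + 0 * f (((\<lambda>_. 0) # ws)[0 := (\<lambda>_. 0)])"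
    using f[unfolded multilin_def, rule_format, of "(\<lambda>_. 0) # ws" 0 "\<lambda>_. 0" "\<lambda>_. 0" 0 0] z ws by simp
  then show ?case by simp
next
  case (Suc R)
  have s: "(\<lambda>e. \<Sum>m<R. c m * B m e) \<in> H" by (rule lsub_sum[OF H]) (use Suc.prems in auto)
  have bR: "B R \<in> H" using Suc.prems by simp
  have "f (((\<lambda>e. \<Sum>m<R. c m * B m e) # ws)[0 := (\<lambda>e. 1 * (\<Sum>m<R. c m * B m e) + c R * B R e)])
      = 1 * f (((\<lambda>e. \<Sum>m<R. c m * B m e) # ws)[0 := (\<lambda>e. \<Sum>m<R. c m * B m e)]) + c R * f (((\<lambda>e. \<Sum>m<R. c m * B m e) # ws)[0 := B R])"
    using f[unfolded multilin_def, rule_format, of "(\<lambda>e. \<Sum>m<R. c m * B m e) # ws" 0 "\<lambda>e. \<Sum>m<R. c m * B m e" "B R" 1 "c R"] s bR ws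
    by simp
  then show ?case using Suc by simp
qed

context RGuv begin

lemma ml_expand:
  "multilin (H1 G) k f \<Longrightarrow> length ws = k \<Longrightarrow> set ws \<subseteq> H1 G \<Longrightarrow>
    f ws = (\<Sum>ms\<in>LS r k. prod_list (map2 alpha ms ws) * f (map bb ms))"
proof (induction k arbitrary: f ws)
  case 0 then show ?case by (simp add: LS_0)
next
  case (Suc k)
  obtain w ws' where ws: "ws = w # ws'" using Suc.prems(2) by (cases ws) auto
  have w: "w \<in> H1 G" "set ws' \<subseteq> H1 G" "length ws' = k" using Suc.prems ws by auto
  have "f ws = f ((\<lambda>e. \<Sum>m<r. alpha m w * bb m e) # ws')" using H1_expand[OF w(1)] ws by simp
  also have "\<dots> = (\<Sum>m<r. alpha m w * f (bb m # ws'))"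
    by (rule multilin_pos0_sum[OF Suc.prems(1) lsub_H1 w(3) w(2) bb_H1])
  also have "\<dots> = (\<Sum>m<r. alpha m w * (\<Sum>ms\<in>LS r k. prod_list (map2 alpha ms ws') * f (bb m # map bb ms)))"
  proof (intro sum.cong refl)
    fix m assume "m \<in> {..<r}"
    then have "multilin (H1 G) k (\<lambda>ws. f (bb m # ws))" using multilin_shift[OF Suc.prems(1) bb_H1] by simp
    then show "alpha m w * f (bb m # ws') = alpha m w * (\<Sum>ms\<in>LS r k. prod_list (map2 alpha ms ws') * f (bb m # map bb ms))"
      using Suc.IH[of "\<lambda>ws. f (bb m # ws)" ws'] w by simp
  qed
  also have "\<dots> = (\<Sum>ms\<in>LS r (Suc k). prod_list (map2 alpha ms ws) * f (map bb ms))"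
    unfolding LS_Suc_sum ws by (simp add: sum_distrib_left mult.assoc)
  finally show ?case .
qed

lemma prod_alpha:
  assumes "length ms = length ws"
  shows "prod_list (map2 alpha ms ws) = prod_list (map2 ip (map bb ms) ws) / prod_list (map dd ms)"
  using assms
proof (induction ms ws rule: list_induct2)
  case Nil then show ?case by simp
next
  case (Cons m ms w ws)
  then show ?case by (simp add: alpha_def ip_sym)
qed

lemma prod_dd: "prod_list (map2 ip (map bb ms) (map bb ms)) = prod_list (map dd ms)"
  by (induction ms) (simp_all add: dd_def)

lemma partc:
  "(\<forall>m\<le>n. multilin (H1 G) m (\<phi> m)) \<Longrightarrow>
    \<exists>A\<in>QPi G u v. \<forall>m\<le>n. \<forall>ws. length ws = m \<and> set ws \<subseteq> H1 G \<longrightarrow> aint G A ws = \<phi> m ws"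
proof (induction n)
  case 0
  let ?A = "\<lambda>c. \<phi> 0 [] * delta gam0 c"
  have "?A \<in> QPi G u v" using lsub_scale[OF lsub_QPi delta_QPi[OF gam0_pi1]] .
  moreover have "aint G ?A [] = \<phi> 0 []"
    using aint_lin[of "delta gam0" "\<lambda>_. 0" "\<phi> 0 []" "[]"] by (simp add: aint_delta)
  ultimately show ?case by (intro bexI[of _ ?A]) auto
next
  case (Suc n)
  then obtain A where A: "A \<in> QPi G u v" and Am: "\<And>m ws. m \<le> n \<Longrightarrow> length ws = m \<Longrightarrow> set ws \<subseteq> H1 G \<Longrightarrow> aint G A ws = \<phi> m ws"
    by auto
  let ?psi = "\<lambda>ws. \<phi> (Suc n) ws - aint G A ws"
  have mpsi: "multilin (H1 G) (Suc n) ?psi" by (rule multilin_diff) (use Suc.prems aint_multilin in auto)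
  define y where "y ms = ?psi (map bb ms) / prod_list (map dd ms)" for ms
  let ?A' = "\<lambda>c. 1 * Comb (Suc n) y c + A c"
  have fA: "fs A" "fs (Comb (Suc n) y)" using A Comb_QPi QPi_fs by blast+
  have A'Q: "?A' \<in> QPi G u v" using lsubD(2)[OF lsub_QPi Comb_QPi A] .
  have aA': "aint G ?A' ws = aint G (Comb (Suc n) y) ws + aint G A ws" for ws
    using aint_lin[OF fA(2) fA(1), of 1 ws] by simp
  have "aint G ?A' ws = \<phi> m ws" if m: "m \<le> Suc n" and ws: "length ws = m" "set ws \<subseteq> H1 G" for m ws
  proof (cases "m \<le> n")
    case True
    then have "aint G (Comb (Suc n) y) ws = 0" using aint_W[OF Comb_W ws(2)] ws(1) by simp
    then show ?thesis using aA' Am[OF True ws] by simp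
  next
    case False
    then have mn: "m = Suc n" using m by simp
    have "aint G (Comb (Suc n) y) ws = (\<Sum>ms\<in>LS r (Suc n). y ms * prod_list (map2 ip (map bb ms) ws))"
      unfolding aint_Comb by (intro sum.cong refl) (use ws mn map_bb_H1 in \<open>simp add: aint_Y LS_def\<close>)
    also have "\<dots> = (\<Sum>ms\<in>LS r (Suc n). prod_list (map2 alpha ms ws) * ?psi (map bb ms))"
    proof (intro sum.cong refl)
      fix ms assume "ms \<in> LS r (Suc n)"
      then have "length ms = length ws" using ws mn by (simp add: LS_def)
      then show "y ms * prod_list (map2 ip (map bb ms) ws) = prod_list (map2 alpha ms ws) * ?psi (map bb ms)"
        unfolding y_def prod_alpha[OF \<open>length ms = length ws\<close>] by (simp add: divide_inverse mult_ac)
    qed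
    also have "\<dots> = ?psi ws" using ml_expand[OF mpsi] ws mn by simp
    finally show ?thesis using aA' mn by simp
  qed
  then show ?case using A'Q by blast
qed

end


context RGuv begin

lemma compat_stable:
  assumes X: "compat G u v X" and ws: "length ws = m" "set ws \<subseteq> H1 G"
  shows "aint G (X (m + d)) ws = aint G (X m) ws"
proof (induction d)
  case 0 then show ?case by simp
next
  case (Suc d)
  have d: "(\<lambda>c. X (Suc (m + d)) c - X (m + d) c) \<in> W (Suc (m + d))" and q: "X (Suc (m + d)) \<in> QPi G u v" "X (m + d) \<in> QPi G u v"
    using X unfolding compat_def by blast+
  have "aint G (\<lambda>c. X (Suc (m + d)) c - X (m + d) c) ws = 0"
    using aint_W[OF d ws(2)] ws(1) by simp
  then have "aint G (X (Suc (m + d))) ws = aint G (X (m + d)) ws"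
    using aint_diff[OF QPi_fs[OF q(1)] QPi_fs[OF q(2)]] by simp
  then show ?case using Suc by simp
qed

lemma main:
   "(\<forall>n.
       (\<forall>A\<in>QPi G u v. A \<in> Wfilt G u v (Suc n) \<longleftrightarrow>
           (\<forall>m\<le>n. \<forall>ws. length ws = m \<and> set ws \<subseteq> H1 G \<longrightarrow> aint G A ws = 0)) \<and>
       (\<forall>\<phi>. (\<forall>m\<le>n. multilin (H1 G) m (\<phi> m)) \<longrightarrow>
           (\<exists>A\<in>QPi G u v. \<forall>m\<le>n. \<forall>ws. length ws = m \<and> set ws \<subseteq> H1 G \<longrightarrow> aint G A ws = \<phi> m ws)))
    \<and> (\<forall>X. compat G u v X \<longrightarrow>
           (\<forall>m. multilin (H1 G) m (aint G (X m))) \<and>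
           (\<forall>m n ws. m \<le> n \<and> length ws = m \<and> set ws \<subseteq> H1 G \<longrightarrow> aint G (X n) ws = aint G (X m) ws))
    \<and> (\<forall>X Y. compat G u v X \<and> compat G u v Y \<and>
           (\<forall>m ws. length ws = m \<and> set ws \<subseteq> H1 G \<longrightarrow> aint G (X m) ws = aint G (Y m) ws) \<longrightarrow>
           (\<forall>n. (\<lambda>c. X n c - Y n c) \<in> Wfilt G u v (Suc n)))
    \<and> (\<forall>\<phi>. (\<forall>m. multilin (H1 G) m (\<phi> m)) \<longrightarrow>
           (\<exists>X. compat G u v X \<and>
              (\<forall>m ws. length ws = m \<and> set ws \<subseteq> H1 G \<longrightarrow> aint G (X m) ws = \<phi> m ws)))"
proof (intro conjI allI impI ballI)
  fix n A assume A: "A \<in> QPi G u v"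
  show "A \<in> W (Suc n) \<longleftrightarrow> (\<forall>m\<le>n. \<forall>ws. length ws = m \<and> set ws \<subseteq> H1 G \<longrightarrow> aint G A ws = 0)"
  proof
    assume "A \<in> W (Suc n)"
    then show "\<forall>m\<le>n. \<forall>ws. length ws = m \<and> set ws \<subseteq> H1 G \<longrightarrow> aint G A ws = 0"
      using aint_W by fastforce
  next
    assume "\<forall>m\<le>n. \<forall>ws. length ws = m \<and> set ws \<subseteq> H1 G \<longrightarrow> aint G A ws = 0"
    then show "A \<in> W (Suc n)" using partb[OF A] by blast
  qed
next
  fix n :: nat and \<phi> :: "nat \<Rightarrow> ('e \<Rightarrow> rat) list \<Rightarrow> rat"
  assume "\<forall>m\<le>n. multilin (H1 G) m (\<phi> m)"
  then show "\<exists>A\<in>QPi G u v. \<forall>m\<le>n. \<forall>ws. length ws = m \<and> set ws \<subseteq> H1 G \<longrightarrow> aint G A ws = \<phi> m ws"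
    by (rule partc)
next
  fix X m show "multilin (H1 G) m (aint G (X m))" by (rule aint_multilin)
next
  fix X m n ws
  assume X: "compat G u v X" and h: "m \<le> n \<and> length ws = m \<and> set ws \<subseteq> H1 G"
  then obtain d where "n = m + d" using le_Suc_ex by blast
  then show "aint G (X n) ws = aint G (X m) ws" using compat_stable[OF X] h by simp
next
  fix X Y n
  assume h: "compat G u v X \<and> compat G u v Y \<and> (\<forall>m ws. length ws = m \<and> set ws \<subseteq> H1 G \<longrightarrow> aint G (X m) ws = aint G (Y m) ws)"
  have q: "X n \<in> QPi G u v" "Y n \<in> QPi G u v" using h unfolding compat_def by blast+
  show "(\<lambda>c. X n c - Y n c) \<in> W (Suc n)"
  proof (rule partb)
    show "(\<lambda>c. X n c - Y n c) \<in> QPi G u v" using lsub_diff[OF lsub_QPi q] .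
    fix m ws assume m: "m \<le> n" "length ws = m" "set ws \<subseteq> H1 G"
    obtain d where d: "n = m + d" using m(1) le_Suc_ex by blast
    have "aint G (X n) ws = aint G (X m) ws" "aint G (Y n) ws = aint G (Y m) ws"
      using compat_stable[of X ws m d] compat_stable[of Y ws m d] h m d by auto
    then show "aint G (\<lambda>c. X n c - Y n c) ws = 0"
      using aint_diff[OF QPi_fs[OF q(1)] QPi_fs[OF q(2)]] h m by simp
  qed
next
  fix \<phi> :: "nat \<Rightarrow> ('e \<Rightarrow> rat) list \<Rightarrow> rat"
  assume ml: "\<forall>m. multilin (H1 G) m (\<phi> m)"
  define P where "P n A \<longleftrightarrow> A \<in> QPi G u v \<and> (\<forall>m\<le>n. \<forall>ws. length ws = m \<and> set ws \<subseteq> H1 G \<longrightarrow> aint G A ws = \<phi> m ws)" for n A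
  have ex: "\<exists>A. P n A" for n using partc[of n \<phi>] ml unfolding P_def by blast
  define X where "X n = (SOME A. P n A)" for n
  have PX: "P n (X n)" for n unfolding X_def using someI_ex[OF ex] .
  have "compat G u v X"
    unfolding compat_def
  proof (intro allI conjI)
    fix n
    show q: "X n \<in> QPi G u v" using PX unfolding P_def by blast
    have q': "X (Suc n) \<in> QPi G u v" using PX unfolding P_def by blast
    show "(\<lambda>c. X (Suc n) c - X n c) \<in> W (Suc n)"
    proof (rule partb)
      show "(\<lambda>c. X (Suc n) c - X n c) \<in> QPi G u v" using lsub_diff[OF lsub_QPi q' q] .
      fix m ws assume m: "m \<le> n" "length ws = m" "set ws \<subseteq> H1 G"
      have "aint G (X (Suc n)) ws = \<phi> m ws" "aint G (X n) ws = \<phi> m ws"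
        using PX[of "Suc n"] PX[of n] m unfolding P_def by auto
      then show "aint G (\<lambda>c. X (Suc n) c - X n c) ws = 0"
        using aint_diff[OF QPi_fs[OF q'] QPi_fs[OF q]] by simp
    qed
  qed
  moreover have "\<forall>m ws. length ws = m \<and> set ws \<subseteq> H1 G \<longrightarrow> aint G (X m) ws = \<phi> m ws"
    using PX unfolding P_def by blast
  ultimately show "\<exists>X. compat G u v X \<and> (\<forall>m ws. length ws = m \<and> set ws \<subseteq> H1 G \<longrightarrow> aint G (X m) ws = \<phi> m ws)"
    by blast
qed

end

theorem theorem4p2:
  fixes G :: "('v, 'e, 'd) graph" and u v :: 'v
  assumes "rat_metrised_graph G" and "u \<in> verts G" and "v \<in> verts G"
  shows
   "(\<forall>n.
       (\<forall>A\<in>QPi G u v. A \<in> Wfilt G u v (Suc n) \<longleftrightarrow>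
           (\<forall>m\<le>n. \<forall>ws. length ws = m \<and> set ws \<subseteq> H1 G \<longrightarrow> aint G A ws = 0)) \<and>
       (\<forall>\<phi>. (\<forall>m\<le>n. multilin (H1 G) m (\<phi> m)) \<longrightarrow>
           (\<exists>A\<in>QPi G u v. \<forall>m\<le>n. \<forall>ws. length ws = m \<and> set ws \<subseteq> H1 G \<longrightarrow> aint G A ws = \<phi> m ws)))
    \<and> (\<forall>X. compat G u v X \<longrightarrow>
           (\<forall>m. multilin (H1 G) m (aint G (X m))) \<and>
           (\<forall>m n ws. m \<le> n \<and> length ws = m \<and> set ws \<subseteq> H1 G \<longrightarrow> aint G (X n) ws = aint G (X m) ws))
    \<and> (\<forall>X Y. compat G u v X \<and> compat G u v Y \<and>
           (\<forall>m ws. length ws = m \<and> set ws \<subseteq> H1 G \<longrightarrow> aint G (X m) ws = aint G (Y m) ws) \<longrightarrow>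
           (\<forall>n. (\<lambda>c. X n c - Y n c) \<in> Wfilt G u v (Suc n)))
    \<and> (\<forall>\<phi>. (\<forall>m. multilin (H1 G) m (\<phi> m)) \<longrightarrow>
           (\<exists>X. compat G u v X \<and>
              (\<forall>m ws. length ws = m \<and> set ws \<subseteq> H1 G \<longrightarrow> aint G (X m) ws = \<phi> m ws)))"
proof -
  have "RGuv G u v"
    by (intro RGuv.intro RG.intro RGuv_axioms.intro) (use assms in auto)
  then show ?thesis by (rule RGuv.main)
qed


end
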